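(* Let $R$, $S$ be finite-dimensional systems with Hamiltonians $H_R,H_S$, let $\rho_R$ be a state on $R$, $\rho_S$ a state on $S$ with $[\rho_S,H_S]=0$, and $\rho'_S$ a state on $S$. Write $\sigma_X(t)=e^{-itH_X}\sigma_X e^{itH_X}$. Then the following are equivalent: (i) there exists a time-translation covariant channel $\mathcal{E}$ on $RS$ with $\mathcal{E}(\rho_R\otimes\rho_S)=\rho_R|\rho'_S$; (ii) there exists a channel $\mathcal{E}$ on $RS$ (not necessarily covariant) such that $\mathcal{E}(\rho_R(t)\otimes\rho_S)=\rho_R(t)|\rho'_S(t)$ for every $t\in\mathbb{R}$. Moreover, in direction (ii)$\Rightarrow$(i), the limit $\tilde{\mathcal{E}}:=\lim_{T\to\infty}\frac1T\int_0^T\mathcal{U}_{-t}\circ\mathcal{E}\circ\mathcal{U}_t\,dt$ (with $\mathcal{U}_t=\mathcal{U}^R_t\otimes\mathcal{U}^S_t$) exists, is a time-translation covariant channel, and satisfies $\tilde{\mathcal{E}}(\rho_R\otimes\rho_S)=\rho_R|\rho'_S$.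
   Context: A channel is a completely positive trace-preserving map. $\mathcal{U}^X_t(\sigma)=e^{-itH_X}\sigma e^{itH_X}$. A channel $\mathcal{E}$ on $RS$ is time-translation covariant if $\mathcal{E}\circ(\mathcal{U}^R_t\otimes\mathcal{U}^S_t)=(\mathcal{U}^R_t\otimes\mathcal{U}^S_t)\circ\mathcal{E}$ for all $t\in\mathbb{R}$. The notation $\sigma_R|\tau_S$ denotes some (possibly correlated) bipartite state on $RS$ whose reduced states are $\sigma_R$ on $R$ and $\tau_S$ on $S$ (the statement "$\mathcal{E}(\cdot)=\sigma_R|\tau_S$" means the output has these two marginals). *)

theory Defs
  imports "HOL-Analysis.Henstock_Kurzweil_Integration" "Jordan_Normal_Form.Matrix"
begin

text \<open>A system of dimension n has operators given by n x n complex matrices.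
  The composite system RS has dimension dR * dS; the basis index of RS is
  r * dS + s (Kronecker convention).\<close>

definition mtrace :: "complex mat \<Rightarrow> complex" where
  "mtrace A = (\<Sum>i<dim_row A. A $$ (i, i))"

definition madj :: "complex mat \<Rightarrow> complex mat" where
  "madj A = mat (dim_col A) (dim_row A) (\<lambda>(i, j). cnj (A $$ (j, i)))"

definition hermitian :: "nat \<Rightarrow> complex mat \<Rightarrow> bool" where
  "hermitian n A \<longleftrightarrow> A \<in> carrier_mat n n \<and> madj A = A"

definition psd :: "nat \<Rightarrow> complex mat \<Rightarrow> bool" where
  "psd n A \<longleftrightarrow> A \<in> carrier_mat n n \<and>
     (\<forall>v :: nat \<Rightarrow> complex.
        let q = (\<Sum>i<n. \<Sum>j<n. cnj (v i) * A $$ (i, j) * v j) in Im q = 0 \<and> Re q \<ge> 0)"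

definition density :: "nat \<Rightarrow> complex mat \<Rightarrow> bool" where
  "density n \<rho> \<longleftrightarrow> psd n \<rho> \<and> mtrace \<rho> = 1"

definition kron :: "complex mat \<Rightarrow> complex mat \<Rightarrow> complex mat" where
  "kron A B = mat (dim_row A * dim_row B) (dim_col A * dim_col B)
     (\<lambda>(i, j). A $$ (i div dim_row B, j div dim_col B) * B $$ (i mod dim_row B, j mod dim_col B))"

text \<open>Partial traces on RS: ptrace_S traces out S (result on R), ptrace_R traces out R.\<close>
definition ptrace_S :: "nat \<Rightarrow> nat \<Rightarrow> complex mat \<Rightarrow> complex mat" where
  "ptrace_S dR dS X = mat dR dR (\<lambda>(a, b). \<Sum>s<dS. X $$ (a * dS + s, b * dS + s))"

definition ptrace_R :: "nat \<Rightarrow> nat \<Rightarrow> complex mat \<Rightarrow> complex mat" where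
  "ptrace_R dR dS X = mat dS dS (\<lambda>(p, q). \<Sum>r<dR. X $$ (r * dS + p, r * dS + q))"

definition mexp :: "complex mat \<Rightarrow> complex mat" where
  "mexp A = mat (dim_row A) (dim_col A)
     (\<lambda>(i, j). \<Sum>k. (A ^\<^sub>m k) $$ (i, j) / of_nat (fact k))"

definition evol :: "complex mat \<Rightarrow> real \<Rightarrow> complex mat \<Rightarrow> complex mat" where
  "evol H t \<sigma> = mexp ((- (\<i> * of_real t)) \<cdot>\<^sub>m H) * \<sigma> * mexp ((\<i> * of_real t) \<cdot>\<^sub>m H)"

definition evol2 :: "complex mat \<Rightarrow> complex mat \<Rightarrow> real \<Rightarrow> complex mat \<Rightarrow> complex mat" where
  "evol2 HR HS t X =
     kron (mexp ((- (\<i> * of_real t)) \<cdot>\<^sub>m HR)) (mexp ((- (\<i> * of_real t)) \<cdot>\<^sub>m HS)) * X *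
     kron (mexp ((\<i> * of_real t) \<cdot>\<^sub>m HR)) (mexp ((\<i> * of_real t) \<cdot>\<^sub>m HS))"

text \<open>id_k \<otimes> E acting on (k*N) x (k*N) matrices (block-wise application of E).\<close>
definition id_tensor :: "nat \<Rightarrow> nat \<Rightarrow> (complex mat \<Rightarrow> complex mat) \<Rightarrow> complex mat \<Rightarrow> complex mat" where
  "id_tensor k N E X = mat (k * N) (k * N)
     (\<lambda>(i, j). E (mat N N (\<lambda>(p, q). X $$ ((i div N) * N + p, (j div N) * N + q))) $$ (i mod N, j mod N))"

definition channel :: "nat \<Rightarrow> (complex mat \<Rightarrow> complex mat) \<Rightarrow> bool" where
  "channel N E \<longleftrightarrow>
     (\<forall>X \<in> carrier_mat N N. E X \<in> carrier_mat N N) \<and>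
     (\<forall>X \<in> carrier_mat N N. \<forall>Y \<in> carrier_mat N N. E (X + Y) = E X + E Y) \<and>
     (\<forall>X \<in> carrier_mat N N. \<forall>c :: complex. E (c \<cdot>\<^sub>m X) = c \<cdot>\<^sub>m E X) \<and>
     (\<forall>X \<in> carrier_mat N N. mtrace (E X) = mtrace X) \<and>
     (\<forall>k X. psd (k * N) X \<longrightarrow> psd (k * N) (id_tensor k N E X))"

definition tt_covariant :: "nat \<Rightarrow> nat \<Rightarrow> complex mat \<Rightarrow> complex mat \<Rightarrow> (complex mat \<Rightarrow> complex mat) \<Rightarrow> bool" where
  "tt_covariant dR dS HR HS E \<longleftrightarrow>
     (\<forall>t :: real. \<forall>X \<in> carrier_mat (dR * dS) (dR * dS).
        E (evol2 HR HS t X) = evol2 HR HS t (E X))"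

end

theory Submission
  imports Defs "Jordan_Normal_Form.Char_Poly" "HOL-Analysis.Complex_Transcendental"
begin

lemma mult_entry:
  assumes "A \<in> carrier_mat n m" "B \<in> carrier_mat m p" "i < n" "j < p"
  shows "(A * B) $$ (i, j) = (\<Sum>k<m. A $$ (i, k) * B $$ (k, j))"
  using assms by (auto simp: scalar_prod_def lessThan_atLeast0 intro!: sum.cong)

lemma sum_mult_split: "(\<Sum>a<(m::nat) * n. f a) = (\<Sum>r<m. \<Sum>s<n. f (r * n + s))"
proof (induction m)
  case 0 then show ?case by simp
next
  case (Suc m)
  have "{..<Suc m * n} = {..<m * n} \<union> {m * n..<m * n + n}" by auto
  moreover have "(\<Sum>a\<in>{m * n..<m * n + n}. f a) = (\<Sum>s<n. f (m * n + s))"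
    by (rule sum.reindex_bij_witness[of _ "\<lambda>a. m * n + a" "\<lambda>a. a - m * n"]) auto
  ultimately show ?case using Suc by (simp add: sum.union_disjoint add.commute ivl_disj_int)
qed

lemma sum_mult_split_divmod: "(\<Sum>a<(m::nat) * n. f a) = (\<Sum>r<m. \<Sum>s<n. f' r s)"
  if "\<And>r s. r < m \<Longrightarrow> s < n \<Longrightarrow> f (r * n + s) = f' r s"
  unfolding sum_mult_split using that by auto

definition ip :: "nat \<Rightarrow> (nat \<Rightarrow> complex) \<Rightarrow> (nat \<Rightarrow> complex) \<Rightarrow> complex" where
  "ip n x y = (\<Sum>i<n. cnj (x i) * y i)"

definition orthn :: "nat \<Rightarrow> nat \<Rightarrow> (nat \<Rightarrow> nat \<Rightarrow> complex) \<Rightarrow> bool" where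
  "orthn n m u \<longleftrightarrow> (\<forall>a<m. \<forall>b<m. ip n (u a) (u b) = (if a = b then 1 else 0))"

lemma ip_self: "ip n x x = complex_of_real (\<Sum>i<n. (cmod (x i))\<^sup>2)"
  unfolding ip_def of_real_sum by (intro sum.cong refl) (metis complex_norm_square mult.commute)

lemma ip_self_zero: "ip n x x = 0 \<Longrightarrow> i < n \<Longrightarrow> x i = 0"
proof -
  assume "ip n x x = 0" "i < n"
  then have "(\<Sum>i<n. (cmod (x i))\<^sup>2) = 0" by (simp only: ip_self of_real_eq_0_iff)
  then have "\<forall>i\<in>{..<n}. (cmod (x i))\<^sup>2 = 0" by (subst (asm) sum_nonneg_eq_0_iff) auto
  with \<open>i < n\<close> show "x i = 0" by auto
qed

lemma ext1:
  assumes o: "orthn n m u" and mn: "m < n"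
  shows "\<exists>w. ip n w w = 1 \<and> (\<forall>a<m. ip n (u a) w = 0)"
proof -
  define P where "P j i = (if i = j then 1 else 0) - (\<Sum>a<m. u a i * cnj (u a j))" for j i
  have orth: "ip n (u b) (P j) = 0" if "b < m" "j < n" for b j
  proof -
    have "ip n (u b) (P j) = (\<Sum>i<n. cnj (u b i) * (if i = j then 1 else 0))
        - (\<Sum>i<n. \<Sum>a<m. cnj (u b i) * u a i * cnj (u a j))"
      unfolding ip_def P_def by (simp add: right_diff_distrib sum_subtractf sum_distrib_left mult.assoc)
    also have "(\<Sum>i<n. cnj (u b i) * (if i = j then 1 else 0)) = cnj (u b j)"
      using that by (simp add: if_distrib cong: if_cong)
    also have "(\<Sum>i<n. \<Sum>a<m. cnj (u b i) * u a i * cnj (u a j))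
        = (\<Sum>a<m. ip n (u b) (u a) * cnj (u a j))"
      unfolding ip_def by (subst sum.swap) (simp add: sum_distrib_right)
    also have "\<dots> = (\<Sum>a<m. (if b = a then cnj (u a j) else 0))"
      using o that unfolding orthn_def by (intro sum.cong) auto
    also have "\<dots> = cnj (u b j)" using that by simp
    finally show ?thesis by simp
  qed
  have "\<exists>j<n. \<exists>i<n. P j i \<noteq> 0"
  proof (rule ccontr)
    assume "\<not> ?thesis"
    then have "(\<Sum>j<n. P j j) = 0" by auto
    moreover have "(\<Sum>j<n. P j j) = of_nat n - (\<Sum>a<m. ip n (u a) (u a))"
      unfolding P_def ip_def by (simp add: sum_subtractf, subst sum.swap) (simp add: mult.commute)
    moreover have "(\<Sum>a<m. ip n (u a) (u a)) = of_nat m"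
      using o unfolding orthn_def by simp
    ultimately show False using mn by simp
  qed
  then obtain j i where ji: "j < n" "i < n" "P j i \<noteq> 0" by blast
  define w0 where "w0 = P j"
  have "ip n w0 w0 \<noteq> 0" using ip_self_zero[of n w0 i] ji unfolding w0_def by auto
  define c where "c = (\<Sum>i<n. (cmod (w0 i))\<^sup>2)"
  have c0: "c > 0"
  proof -
    have "c \<ge> 0" unfolding c_def by (intro sum_nonneg) auto
    moreover have "c \<noteq> 0" using \<open>ip n w0 w0 \<noteq> 0\<close> unfolding ip_self c_def of_real_eq_0_iff .
    ultimately show ?thesis by simp
  qed
  define w where "w i = w0 i / complex_of_real (sqrt c)" for i
  have cc: "complex_of_real (sqrt c) * complex_of_real (sqrt c) = complex_of_real c"
    using c0 by (simp flip: of_real_mult)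
  have "ip n w w = (\<Sum>i<n. cnj (w0 i) * w0 i / (complex_of_real (sqrt c) * complex_of_real (sqrt c)))"
    unfolding ip_def w_def by (intro sum.cong refl) simp
  also have "\<dots> = ip n w0 w0 / complex_of_real c" unfolding cc ip_def by (simp add: sum_divide_distrib)
  also have "\<dots> = 1" using c0 unfolding ip_self c_def[symmetric] by simp
  finally have "ip n w w = 1" .
  moreover have "ip n (u a) w = 0" if "a < m" for a
  proof -
    have "ip n (u a) w = ip n (u a) w0 / complex_of_real (sqrt c)"
      unfolding ip_def w_def by (simp add: sum_divide_distrib)
    then show ?thesis using orth[OF that ji(1)] unfolding w0_def by simp
  qed
  ultimately show ?thesis by blast
qed

lemma ext_full:
  assumes "orthn n m u" "m \<le> n"
  shows "\<exists>u'. orthn n n u' \<and> (\<forall>a<m. u' a = u a)"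
  using assms
proof (induction "n - m" arbitrary: m u)
  case 0 then show ?case by (intro exI[of _ u]) auto
next
  case (Suc d)
  then have mn: "m < n" by simp
  obtain w where w: "ip n w w = 1" "\<forall>a<m. ip n (u a) w = 0" using ext1[OF Suc(3) mn] by blast
  define u2 where "u2 = u(m := w)"
  have "orthn n (Suc m) u2"
  proof -
    have ipc: "ip n w (u a) = cnj (ip n (u a) w)" for a unfolding ip_def by (simp add: mult.commute)
    show ?thesis using Suc(3) w unfolding orthn_def u2_def
      by (auto simp: less_Suc_eq ipc)
  qed
  have dd: "d = n - Suc m" using Suc(2) by arith
  from Suc(1)[OF dd \<open>orthn n (Suc m) u2\<close>] mn obtain u' where
    "orthn n n u'" "\<forall>a<Suc m. u' a = u2 a" by auto
  then show ?case unfolding u2_def by (intro exI[of _ u']) auto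
qed

lemma completeness:
  assumes o: "orthn n n u" and i: "i < n" and j: "j < n"
  shows "(\<Sum>a<n. u a i * cnj (u a j)) = (if i = j then 1 else 0)"
proof -
  define Um where "Um = mat n n (\<lambda>(i, a). u a i)"
  define Ua where "Ua = mat n n (\<lambda>(a, i). cnj (u a i))"
  have c: "Um \<in> carrier_mat n n" "Ua \<in> carrier_mat n n" unfolding Um_def Ua_def by auto
  have "Ua * Um = 1\<^sub>m n"
  proof (rule eq_matI)
    fix a b assume "a < dim_row (1\<^sub>m n)" "b < dim_col (1\<^sub>m n)"
    then have ab: "a < n" "b < n" by auto
    have "(Ua * Um) $$ (a, b) = ip n (u a) (u b)"
      unfolding ip_def by (subst mult_entry[OF c(2) c(1) ab]) (simp add: Ua_def Um_def ab)
    then show "(Ua * Um) $$ (a, b) = 1\<^sub>m n $$ (a, b)" using o ab unfolding orthn_def by auto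
  qed (use c in auto)
  then have "Um * Ua = 1\<^sub>m n" by (rule mat_mult_left_right_inverse[OF c(2) c(1)])
  then have "(Um * Ua) $$ (i, j) = (if i = j then 1 else 0)" using i j by simp
  then show ?thesis by (subst (asm) mult_entry[OF c(1) c(2) i j]) (simp add: Ua_def Um_def i j)
qed

lemma herm_entry:
  assumes "hermitian n H" "i < n" "j < n"
  shows "H $$ (i, j) = cnj (H $$ (j, i))"
proof -
  have H: "H \<in> carrier_mat n n" "madj H = H" using assms(1) unfolding hermitian_def by auto
  have "madj H $$ (i, j) = cnj (H $$ (j, i))" using H(1) assms(2,3) unfolding madj_def by auto
  then show ?thesis using H(2) by simp
qed

definition hv :: "nat \<Rightarrow> complex mat \<Rightarrow> (nat \<Rightarrow> complex) \<Rightarrow> nat \<Rightarrow> complex" where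
  "hv n H x = (\<lambda>i. \<Sum>j<n. H $$ (i, j) * x j)"

lemma normalize:
  assumes "ip n v v \<noteq> 0"
  shows "\<exists>c. c \<noteq> 0 \<and> ip n (\<lambda>i. c * v i) (\<lambda>i. c * v i) = 1"
proof -
  define r where "r = (\<Sum>i<n. (cmod (v i))\<^sup>2)"
  have r0: "r > 0"
  proof -
    have "r \<ge> 0" unfolding r_def by (intro sum_nonneg) auto
    moreover have "r \<noteq> 0" using assms unfolding ip_self r_def of_real_eq_0_iff .
    ultimately show ?thesis by simp
  qed
  define c where "c = complex_of_real (1 / sqrt r)"
  have "ip n (\<lambda>i. c * v i) (\<lambda>i. c * v i) = (cnj c * c) * ip n v v"
    unfolding ip_def by (simp add: sum_distrib_left algebra_simps)
  also have "cnj c * c = complex_of_real (1 / r)" unfolding c_def using r0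
    by (simp flip: of_real_mult add: real_sqrt_mult_self)
  also have "ip n v v = complex_of_real r" unfolding ip_self r_def ..
  finally have "ip n (\<lambda>i. c * v i) (\<lambda>i. c * v i) = 1" using r0 by (simp flip: of_real_mult)
  moreover have "c \<noteq> 0" using r0 unfolding c_def by simp
  ultimately show ?thesis by blast
qed

lemma sum_split_add: "(\<Sum>a<k + m. f a) = (\<Sum>a<(k::nat). f a) + (\<Sum>p<m. f (k + p))"
  by (induction m) (auto simp: add.assoc)

lemma ip_conj: "ip n y x = cnj (ip n x y)"
  unfolding ip_def by (simp add: mult.commute)

lemma expand:
  assumes o: "orthn n n b" and i: "i < n"
  shows "y i = (\<Sum>a<n. b a i * ip n (b a) y)"
proof -
  have "(\<Sum>a<n. b a i * ip n (b a) y) = (\<Sum>l<n. (\<Sum>a<n. b a i * cnj (b a l)) * y l)"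
    unfolding ip_def by (simp add: sum_distrib_left sum_distrib_right mult.assoc, subst sum.swap, simp)
  also have "\<dots> = (\<Sum>l<n. (if i = l then y l else 0))"
    using completeness[OF o i] by (intro sum.cong) auto
  also have "\<dots> = y i" using i by simp
  finally show ?thesis by simp
qed

lemma herm_ip:
  assumes "hermitian n H"
  shows "ip n x (hv n H y) = ip n (hv n H x) y"
proof -
  have "ip n x (hv n H y) = (\<Sum>j<n. (\<Sum>i<n. cnj (x i) * H $$ (i, j)) * y j)"
    unfolding ip_def hv_def by (simp add: sum_distrib_left sum_distrib_right mult.assoc, subst sum.swap, simp)
  also have "\<dots> = ip n (hv n H x) y"
    unfolding ip_def hv_def
  proof (intro sum.cong refl arg_cong2[where f = "(*)"])
    fix j assume j: "j \<in> {..<n}"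
    show "(\<Sum>i<n. cnj (x i) * H $$ (i, j)) = cnj (\<Sum>i<n. H $$ (j, i) * x i)"
      unfolding cnj_sum
    proof (intro sum.cong refl)
      fix i assume i: "i \<in> {..<n}"
      show "cnj (x i) * H $$ (i, j) = cnj (H $$ (j, i) * x i)"
        using herm_entry[OF assms, of i j] i j by (simp add: mult.commute)
    qed
  qed
  finally show ?thesis .
qed

lemma eig_step:
  assumes hH: "hermitian n H" and o: "orthn n k u"
   and eig: "\<forall>a<k. \<forall>i<n. hv n H (u a) i = complex_of_real (lam a) * u a i" and kn: "k < n"
  shows "\<exists>w l. ip n w w = 1 \<and> (\<forall>a<k. ip n (u a) w = 0) \<and> (\<forall>i<n. hv n H w i = complex_of_real l * w i)"
proof -
  obtain b where b: "orthn n n b" "\<forall>a<k. b a = u a" using ext_full[OF o] kn by auto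
  define m where "m = n - k"
  have m0: "m > 0" and nkm: "n = k + m" using kn m_def by auto
  define M where "M = mat m m (\<lambda>(p, q). ip n (b (k + p)) (hv n H (b (k + q))))"
  have Mc: "M \<in> carrier_mat m m" unfolding M_def by simp
  obtain as where as: "char_poly M = (\<Prod>a\<leftarrow>as. [:- a, 1:])" "length as = m"
    using char_poly_factorized[OF Mc] by blast
  then obtain e where e: "e \<in> set as" using m0 by (cases as) auto
  have "poly (char_poly M) e = 0" unfolding as(1) using e
    by (simp add: poly_prod_list prod_list_zero_iff o_def)
  then have "eigenvalue M e" using eigenvalue_root_char_poly[OF Mc] by simp
  define c where "c = find_eigenvector M e"
  have ev: "eigenvector M c e" unfolding c_def by (rule find_eigenvector[OF Mc]) fact
  then have cc: "c \<in> carrier_vec m" "c \<noteq> 0\<^sub>v m" "M *\<^sub>v c = e \<cdot>\<^sub>v c"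
    using Mc unfolding eigenvector_def by auto
  have Mce: "(\<Sum>q<m. M $$ (p, q) * c $ q) = e * c $ p" if "p < m" for p
  proof -
    have "(M *\<^sub>v c) $ p = e * c $ p" using cc(3) that cc(1) by simp
    moreover have "(M *\<^sub>v c) $ p = (\<Sum>q<m. M $$ (p, q) * c $ q)"
      using that Mc cc(1) by (simp add: scalar_prod_def lessThan_atLeast0)
    ultimately show ?thesis by simp
  qed
  define v where "v i = (\<Sum>q<m. b (k + q) i * c $ q)" for i
  have ipbv: "ip n (b a) v = (if a < k then 0 else c $ (a - k))" if a: "a < n" for a
  proof -
    have "ip n (b a) v = (\<Sum>q<m. c $ q * ip n (b a) (b (k + q)))"
      unfolding ip_def v_def by (simp only: sum_distrib_left, subst sum.swap, intro sum.cong refl, simp add: mult_ac)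
    also have "\<dots> = (\<Sum>q<m. if q = a - k \<and> k \<le> a then c $ q else 0)"
      using b(1) a nkm by (intro sum.cong refl) (auto simp: orthn_def)
    also have "\<dots> = (if a < k then 0 else c $ (a - k))"
      using a nkm by (cases "a < k") auto
    finally show ?thesis .
  qed
  have hip0: "ip n (b a) (hv n H (b (k + q))) = 0" if "a < k" "q < m" for a q
  proof -
    have "ip n (b a) (hv n H (b (k + q))) = ip n (hv n H (b a)) (b (k + q))"
      by (rule herm_ip[OF hH])
    also have "\<dots> = ip n (\<lambda>i. complex_of_real (lam a) * b a i) (b (k + q))"
      unfolding ip_def using eig b(2) that by (intro sum.cong refl) auto
    also have "\<dots> = complex_of_real (lam a) * ip n (b a) (b (k + q))"
      unfolding ip_def by (simp add: sum_distrib_left mult.assoc)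
    also have "\<dots> = 0" using b(1) that nkm unfolding orthn_def by auto
    finally show ?thesis .
  qed
  have Hb: "hv n H (b (k + q)) i = (\<Sum>p<m. b (k + p) i * M $$ (p, q))" if "q < m" "i < n" for q i
  proof -
    have "hv n H (b (k + q)) i = (\<Sum>a<n. b a i * ip n (b a) (hv n H (b (k + q))))"
      by (rule expand[OF b(1) that(2)])
    also have "\<dots> = (\<Sum>a<k. b a i * ip n (b a) (hv n H (b (k + q))))
        + (\<Sum>p<m. b (k + p) i * ip n (b (k + p)) (hv n H (b (k + q))))"
      unfolding nkm by (rule sum_split_add)
    also have "(\<Sum>a<k. b a i * ip n (b a) (hv n H (b (k + q)))) = 0"
      using hip0 that by simp
    also have "(\<Sum>p<m. b (k + p) i * ip n (b (k + p)) (hv n H (b (k + q))))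
        = (\<Sum>p<m. b (k + p) i * M $$ (p, q))"
      unfolding M_def using that by (intro sum.cong refl) auto
    finally show ?thesis by simp
  qed
  have Hv: "hv n H v i = e * v i" if i: "i < n" for i
  proof -
    have "hv n H v i = (\<Sum>q<m. c $ q * hv n H (b (k + q)) i)"
      unfolding hv_def v_def by (simp only: sum_distrib_left, subst sum.swap, intro sum.cong refl, simp add: mult_ac)
    also have "\<dots> = (\<Sum>q<m. c $ q * (\<Sum>p<m. b (k + p) i * M $$ (p, q)))"
      using Hb i by (intro sum.cong refl) auto
    also have "\<dots> = (\<Sum>p<m. b (k + p) i * (\<Sum>q<m. M $$ (p, q) * c $ q))"
      by (simp only: sum_distrib_left, subst sum.swap, intro sum.cong refl, simp add: mult_ac)
    also have "\<dots> = (\<Sum>p<m. b (k + p) i * (e * c $ p))"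
      using Mce by (intro sum.cong refl) auto
    also have "\<dots> = e * v i" unfolding v_def by (simp add: sum_distrib_left mult.left_commute)
    finally show ?thesis .
  qed
  obtain p where p: "p < m" "c $ p \<noteq> 0"
  proof -
    have "\<exists>p<m. c $ p \<noteq> 0"
    proof (rule ccontr)
      assume "\<not> ?thesis"
      then have "c = 0\<^sub>v m" using cc(1) by (intro eq_vecI) auto
      then show False using cc(2) by simp
    qed
    then show thesis using that by blast
  qed
  have vv: "ip n v v \<noteq> 0"
  proof
    assume "ip n v v = 0"
    then have "\<forall>i<n. v i = 0" using ip_self_zero by blast
    then have "ip n (b (k + p)) v = 0" unfolding ip_def by simp
    then show False using ipbv[of "k + p"] p nkm by simp
  qed
  have "ip n v (hv n H v) = e * ip n v v"
    unfolding ip_def using Hv by (simp add: sum_distrib_left mult.left_commute)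
  moreover have "Im (ip n v (hv n H v)) = 0"
  proof -
    have "ip n v (hv n H v) = cnj (ip n v (hv n H v))"
      using herm_ip[OF hH, of v v] ip_conj[of n "hv n H v" v] by simp
    from arg_cong[OF this, of Im] show ?thesis by simp
  qed
  ultimately have "Im (e * ip n v v) = 0" by simp
  moreover obtain r where ipr: "ip n v v = complex_of_real r" using ip_self by blast
  moreover have "r \<noteq> 0" using vv ipr by auto
  ultimately have eI: "Im e = 0" by simp
  define l where "l = Re e"
  have el: "e = complex_of_real l" unfolding l_def using eI by (simp add: complex_eq_iff)
  obtain g where g: "g \<noteq> 0" "ip n (\<lambda>i. g * v i) (\<lambda>i. g * v i) = 1" using normalize[OF vv] by blast
  define w where "w i = g * v i" for i
  have "ip n w w = 1" using g(2) unfolding w_def .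
  moreover have "\<forall>a<k. ip n (u a) w = 0"
  proof (intro allI impI)
    fix a assume a: "a < k"
    have "ip n (u a) w = g * ip n (b a) v" unfolding ip_def w_def using b(2) a
      by (simp add: sum_distrib_left mult.left_commute)
    then show "ip n (u a) w = 0" using ipbv[of a] a nkm by simp
  qed
  moreover have "\<forall>i<n. hv n H w i = complex_of_real l * w i"
  proof (intro allI impI)
    fix i assume i: "i < n"
    have "hv n H w i = g * hv n H v i" unfolding hv_def w_def by (simp add: sum_distrib_left mult.left_commute)
    then show "hv n H w i = complex_of_real l * w i" using Hv[OF i] el unfolding w_def by simp
  qed
  ultimately show ?thesis by blast
qed

lemma sum3_swap: "(\<Sum>l\<in>L. \<Sum>a\<in>A. \<Sum>b\<in>B. f l a b) = (\<Sum>a\<in>A. \<Sum>b\<in>B. \<Sum>l\<in>L. f l a b)"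
proof -
  have "(\<Sum>l\<in>L. \<Sum>a\<in>A. \<Sum>b\<in>B. f l a b) = (\<Sum>a\<in>A. \<Sum>l\<in>L. \<Sum>b\<in>B. f l a b)"
    by (rule sum.swap)
  also have "\<dots> = (\<Sum>a\<in>A. \<Sum>b\<in>B. \<Sum>l\<in>L. f l a b)"
    by (intro sum.cong refl) (rule sum.swap)
  finally show ?thesis .
qed

lemma sum_delta_mult: "i \<in> A \<Longrightarrow> finite A \<Longrightarrow> (\<Sum>l\<in>A. f l * (if l = i then 1 else 0)) = (f i :: 'a :: semiring_1)"
  by (simp add: if_distrib cong: if_cong)

lemma spectral_aux:
  assumes hH: "hermitian n H" and kn: "k \<le> n"
  shows "\<exists>u lam. orthn n k u \<and> (\<forall>a<k. \<forall>i<n. hv n H (u a) i = complex_of_real (lam a) * u a i)"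
  using kn
proof (induction k)
  case 0 then show ?case by (auto simp: orthn_def)
next
  case (Suc k)
  then obtain u lam where ul: "orthn n k u" "\<forall>a<k. \<forall>i<n. hv n H (u a) i = complex_of_real (lam a) * u a i"
    by auto
  obtain w l where wl: "ip n w w = 1" "\<forall>a<k. ip n (u a) w = 0" "\<forall>i<n. hv n H w i = complex_of_real l * w i"
    using eig_step[OF hH ul] Suc(2) by auto
  define u' where "u' = u(k := w)"
  define lam' where "lam' = lam(k := l)"
  have "orthn n (Suc k) u'"
  proof -
    have "\<forall>a<k. ip n w (u a) = 0" using wl(2) ip_conj[of n w] by (metis complex_cnj_zero)
    then show ?thesis using ul(1) wl(1,2) unfolding orthn_def u'_def by (auto simp: less_Suc_eq)
  qed
  moreover have "\<forall>a<Suc k. \<forall>i<n. hv n H (u' a) i = complex_of_real (lam' a) * u' a i"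
    using ul(2) wl(3) unfolding u'_def lam'_def by (auto simp: less_Suc_eq)
  ultimately show ?case by blast
qed

definition spm :: "nat \<Rightarrow> (nat \<Rightarrow> nat \<Rightarrow> complex) \<Rightarrow> (nat \<Rightarrow> complex) \<Rightarrow> complex mat" where
  "spm n u \<mu> = mat n n (\<lambda>(i, j). \<Sum>a<n. \<mu> a * u a i * cnj (u a j))"

lemma spm_carrier[simp]: "spm n u \<mu> \<in> carrier_mat n n"
  and spm_dim[simp]: "dim_row (spm n u \<mu>) = n" "dim_col (spm n u \<mu>) = n"
  unfolding spm_def by auto

lemma spm_entry[simp]: "i < n \<Longrightarrow> j < n \<Longrightarrow> spm n u \<mu> $$ (i, j) = (\<Sum>a<n. \<mu> a * u a i * cnj (u a j))"
  unfolding spm_def by simp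

lemma spectral:
  assumes hH: "hermitian n H"
  shows "\<exists>u lam. orthn n n u \<and> H = spm n u (\<lambda>a. complex_of_real (lam a))"
proof -
  obtain u lam where ul: "orthn n n u" "\<forall>a<n. \<forall>i<n. hv n H (u a) i = complex_of_real (lam a) * u a i"
    using spectral_aux[OF hH order.refl] by blast
  have Hc: "H \<in> carrier_mat n n" using hH unfolding hermitian_def by auto
  have "H = spm n u (\<lambda>a. complex_of_real (lam a))"
  proof (rule eq_matI)
    fix i j assume "i < dim_row (spm n u (\<lambda>a. complex_of_real (lam a)))" "j < dim_col (spm n u (\<lambda>a. complex_of_real (lam a)))"
    then have ij: "i < n" "j < n" by auto
    have "H $$ (i, j) = (\<Sum>l<n. H $$ (i, l) * (if l = j then 1 else 0))" using ij by (subst sum_delta_mult) auto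
    also have "\<dots> = (\<Sum>l<n. H $$ (i, l) * (\<Sum>a<n. u a l * cnj (u a j)))"
      using completeness[OF ul(1) _ ij(2)] by (intro sum.cong refl) auto
    also have "\<dots> = (\<Sum>a<n. hv n H (u a) i * cnj (u a j))"
      unfolding hv_def by (simp only: sum_distrib_left sum_distrib_right, subst sum.swap, intro sum.cong refl, simp add: mult_ac)
    also have "\<dots> = spm n u (\<lambda>a. complex_of_real (lam a)) $$ (i, j)"
      using ul(2) ij by simp
    finally show "H $$ (i, j) = spm n u (\<lambda>a. complex_of_real (lam a)) $$ (i, j)" .
  qed (use Hc in auto)
  with ul show ?thesis by blast
qed

lemma spm_mult:
  assumes o: "orthn n n u"
  shows "spm n u \<alpha> * spm n u \<beta> = spm n u (\<lambda>a. \<alpha> a * \<beta> a)"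
proof (rule eq_matI)
  fix i j assume "i < dim_row (spm n u (\<lambda>a. \<alpha> a * \<beta> a))" "j < dim_col (spm n u (\<lambda>a. \<alpha> a * \<beta> a))"
  then have ij: "i < n" "j < n" by auto
  have "(spm n u \<alpha> * spm n u \<beta>) $$ (i, j) = (\<Sum>l<n. (\<Sum>a<n. \<alpha> a * u a i * cnj (u a l)) * (\<Sum>b<n. \<beta> b * u b l * cnj (u b j)))"
    using ij by (subst mult_entry[of _ n n _ n]) auto
  also have "\<dots> = (\<Sum>l<n. \<Sum>a<n. \<Sum>b<n. (\<alpha> a * u a i * cnj (u a l)) * (\<beta> b * u b l * cnj (u b j)))"
    by (simp only: sum_product)
  also have "\<dots> = (\<Sum>a<n. \<Sum>b<n. \<Sum>l<n. (\<alpha> a * u a i * cnj (u a l)) * (\<beta> b * u b l * cnj (u b j)))"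
    by (rule sum3_swap)
  also have "\<dots> = (\<Sum>a<n. \<Sum>b<n. \<alpha> a * \<beta> b * u a i * cnj (u b j) * ip n (u a) (u b))"
    unfolding ip_def sum_distrib_left by (intro sum.cong refl) (simp add: mult_ac)
  also have "\<dots> = (\<Sum>a<n. \<Sum>b<n. if b = a then \<alpha> a * \<beta> b * u a i * cnj (u b j) else 0)"
    using o unfolding orthn_def by (intro sum.cong refl) auto
  also have "\<dots> = spm n u (\<lambda>a. \<alpha> a * \<beta> a) $$ (i, j)" using ij by simp
  finally show "(spm n u \<alpha> * spm n u \<beta>) $$ (i, j) = spm n u (\<lambda>a. \<alpha> a * \<beta> a) $$ (i, j)" .
qed auto

lemma spm_one:
  assumes o: "orthn n n u"
  shows "spm n u (\<lambda>a. 1) = 1\<^sub>m n"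
  by (rule eq_matI) (use completeness[OF o] in auto)

lemma spm_pow:
  assumes o: "orthn n n u"
  shows "spm n u \<mu> ^\<^sub>m k = spm n u (\<lambda>a. \<mu> a ^ k)"
proof (induction k)
  case 0 then show ?case using spm_one[OF o] by simp
next
  case (Suc k) then show ?case using spm_mult[OF o] by (simp add: mult.commute)
qed

lemma spm_smult: "c \<cdot>\<^sub>m spm n u \<mu> = spm n u (\<lambda>a. c * \<mu> a)"
  by (rule eq_matI) (auto simp: sum_distrib_left mult_ac)

lemma madj_spm: "madj (spm n u \<mu>) = spm n u (\<lambda>a. cnj (\<mu> a))"
  unfolding madj_def by (rule eq_matI) (auto simp: cnj_sum mult_ac)

lemma exp_series: "(\<lambda>k. x ^ k / of_nat (fact k)) sums exp (x :: complex)"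
proof -
  have "(\<lambda>k. x ^ k /\<^sub>R fact k) sums exp x" by (rule exp_converges)
  moreover have "x ^ k /\<^sub>R fact k = x ^ k / of_nat (fact k)" for k
    by (simp add: scaleR_conv_of_real divide_inverse_commute of_real_fact)
  ultimately show ?thesis by simp
qed

lemma mexp_spm:
  assumes o: "orthn n n u"
  shows "mexp (spm n u \<mu>) = spm n u (\<lambda>a. exp (\<mu> a))"
proof (rule eq_matI)
  fix i j assume "i < dim_row (spm n u (\<lambda>a. exp (\<mu> a)))" "j < dim_col (spm n u (\<lambda>a. exp (\<mu> a)))"
  then have ij: "i < n" "j < n" by auto
  have "(\<lambda>k. (spm n u \<mu> ^\<^sub>m k) $$ (i, j) / of_nat (fact k)) = (\<lambda>k. \<Sum>a<n. (u a i * cnj (u a j)) * (\<mu> a ^ k / of_nat (fact k)))"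
    unfolding spm_pow[OF o] using ij by (auto simp: sum_divide_distrib mult_ac)
  moreover have "(\<lambda>k. \<Sum>a<n. (u a i * cnj (u a j)) * (\<mu> a ^ k / of_nat (fact k))) sums (\<Sum>a<n. (u a i * cnj (u a j)) * exp (\<mu> a))"
    by (intro sums_sum sums_mult exp_series)
  ultimately have "(\<Sum>k. (spm n u \<mu> ^\<^sub>m k) $$ (i, j) / of_nat (fact k)) = (\<Sum>a<n. (u a i * cnj (u a j)) * exp (\<mu> a))"
    by (simp add: sums_iff)
  then show "mexp (spm n u \<mu>) $$ (i, j) = spm n u (\<lambda>a. exp (\<mu> a)) $$ (i, j)"
    unfolding mexp_def using ij by (simp add: mult_ac)
qed (auto simp: mexp_def)

definition has_avg :: "(real \<Rightarrow> complex) \<Rightarrow> complex \<Rightarrow> bool" where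
  "has_avg g L \<longleftrightarrow> (\<forall>T. g integrable_on {0..T}) \<and> ((\<lambda>T. (1 / T) *\<^sub>R integral {0..T} g) \<longlongrightarrow> L) at_top"

lemma has_avg_unique: "has_avg g L \<Longrightarrow> has_avg g L' \<Longrightarrow> L = L'"
  unfolding has_avg_def by (meson tendsto_unique trivial_limit_at_top_linorder)

lemma has_avg_add: "has_avg f L \<Longrightarrow> has_avg g M \<Longrightarrow> has_avg (\<lambda>t. f t + g t) (L + M)"
  unfolding has_avg_def
proof (intro conjI allI)
  assume a: "(\<forall>T. f integrable_on {0..T}) \<and> ((\<lambda>T. (1 / T) *\<^sub>R integral {0..T} f) \<longlongrightarrow> L) at_top"
    "(\<forall>T. g integrable_on {0..T}) \<and> ((\<lambda>T. (1 / T) *\<^sub>R integral {0..T} g) \<longlongrightarrow> M) at_top"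
  then show "(\<lambda>t. f t + g t) integrable_on {0..T}" for T by (intro integrable_add) auto
  have "((\<lambda>T. (1 / T) *\<^sub>R integral {0..T} f + (1 / T) *\<^sub>R integral {0..T} g) \<longlongrightarrow> L + M) at_top"
    using a by (intro tendsto_add) auto
  moreover have "(1 / T) *\<^sub>R integral {0..T} (\<lambda>t. f t + g t) = (1 / T) *\<^sub>R integral {0..T} f + (1 / T) *\<^sub>R integral {0..T} g" for T
    using a by (simp add: integral_add scaleR_add_right)
  ultimately show "((\<lambda>T. (1 / T) *\<^sub>R integral {0..T} (\<lambda>t. f t + g t)) \<longlongrightarrow> L + M) at_top" by simp
qed

lemma has_avg_cmult: "has_avg f L \<Longrightarrow> has_avg (\<lambda>t. c * f t) (c * L)"
  unfolding has_avg_def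
proof (intro conjI allI)
  assume a: "(\<forall>T. f integrable_on {0..T}) \<and> ((\<lambda>T. (1 / T) *\<^sub>R integral {0..T} f) \<longlongrightarrow> L) at_top"
  then show "(\<lambda>t. c * f t) integrable_on {0..T}" for T by (intro integrable_on_mult_right) auto
  have "((\<lambda>T. c * ((1 / T) *\<^sub>R integral {0..T} f)) \<longlongrightarrow> c * L) at_top"
    using a by (intro tendsto_mult tendsto_const) auto
  moreover have "(1 / T) *\<^sub>R integral {0..T} (\<lambda>t. c * f t) = c * ((1 / T) *\<^sub>R integral {0..T} f)" for T
    using a by (simp add: integral_mult_right)
  ultimately show "((\<lambda>T. (1 / T) *\<^sub>R integral {0..T} (\<lambda>t. c * f t)) \<longlongrightarrow> c * L) at_top" by simp
qed

lemma has_avg_zero: "has_avg (\<lambda>t. 0) 0"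
  unfolding has_avg_def by auto

lemma has_avg_sum: "finite S \<Longrightarrow> (\<And>k. k \<in> S \<Longrightarrow> has_avg (f k) (L k)) \<Longrightarrow> has_avg (\<lambda>t. \<Sum>k\<in>S. f k t) (\<Sum>k\<in>S. L k)"
proof (induction S rule: finite_induct)
  case empty then show ?case using has_avg_zero by simp
next
  case (insert x F)
  then show ?case by (simp, intro has_avg_add) auto
qed

lemma has_avg_cong: "has_avg f L \<Longrightarrow> (\<And>t. f t = g t) \<Longrightarrow> L = M \<Longrightarrow> has_avg g M"
proof -
  assume "has_avg f L" "\<And>t. f t = g t" "L = M"
  moreover then have "f = g" by auto
  ultimately show ?thesis by simp
qed

lemma has_avg_const: "has_avg (\<lambda>t. c) c"
  unfolding has_avg_def
proof (intro conjI allI)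
  show "(\<lambda>t. c) integrable_on {0..T}" for T :: real by (rule integrable_const_ivl)
  have "\<forall>\<^sub>F T in at_top. c = (1 / T) *\<^sub>R integral {0..T} (\<lambda>t. c)"
    using eventually_gt_at_top[of "0::real"] by eventually_elim simp
  then show "((\<lambda>T. (1 / T) *\<^sub>R integral {0..T} (\<lambda>t. c)) \<longlongrightarrow> c) at_top"
    by (rule Lim_transform_eventually[OF tendsto_const])
qed

lemma norm_exp_ir: "norm (exp (\<i> * complex_of_real x)) = 1"
  by (simp add: norm_exp_eq_Re)

lemma has_avg_exp: "has_avg (\<lambda>t. K * exp (\<i> * complex_of_real ((t + s) * \<omega>))) (if \<omega> = 0 then K else 0)"
proof (cases "\<omega> = 0")
  case True
  then show ?thesis by (intro has_avg_cong[OF has_avg_const]) auto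
next
  case False
  define g where "g t = K * exp (\<i> * complex_of_real ((t + s) * \<omega>))" for t
  define Fc where "Fc z = K * exp (\<i> * ((z + complex_of_real s) * complex_of_real \<omega>)) / (\<i> * complex_of_real \<omega>)" for z
  have dFc: "(Fc has_field_derivative K * exp (\<i> * ((z + complex_of_real s) * complex_of_real \<omega>))) (at z)" for z
    unfolding Fc_def using False by (auto intro!: derivative_eq_intros simp: field_simps)
  have dF: "((\<lambda>t. Fc (complex_of_real t)) has_vector_derivative g t) (at t within X)" for t X
  proof -
    have "((\<lambda>t. Fc (complex_of_real t)) has_vector_derivative K * exp (\<i> * ((complex_of_real t + complex_of_real s) * complex_of_real \<omega>))) (at t within X)"
      by (rule has_vector_derivative_real_field[OF dFc])
    moreover have "K * exp (\<i> * ((complex_of_real t + complex_of_real s) * complex_of_real \<omega>)) = g t"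
      unfolding g_def by simp
    ultimately show ?thesis by simp
  qed
  have cont: "continuous_on X g" for X unfolding g_def by (intro continuous_intros)
  have int: "g integrable_on {0..T}" for T by (rule integrable_continuous_interval[OF cont])
  have bnd: "norm (Fc (complex_of_real T) - Fc (complex_of_real 0)) \<le> 2 * norm K / \<bar>\<omega>\<bar>" for T
  proof -
    have nF: "norm (Fc (complex_of_real x)) = norm K / \<bar>\<omega>\<bar>" for x
    proof -
      have "Fc (complex_of_real x) = K * exp (\<i> * complex_of_real ((x + s) * \<omega>)) / (\<i> * complex_of_real \<omega>)"
        unfolding Fc_def by simp
      then show ?thesis by (simp add: norm_mult norm_divide norm_exp_ir)
    qed
    have "norm (Fc (complex_of_real T) - Fc (complex_of_real 0)) \<le> norm (Fc (complex_of_real T)) + norm (Fc (complex_of_real 0))"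
      by (rule norm_triangle_ineq4)
    also have "\<dots> = 2 * norm K / \<bar>\<omega>\<bar>" unfolding nF by simp
    finally show ?thesis .
  qed
  have "((\<lambda>T. (1 / T) *\<^sub>R integral {0..T} g) \<longlongrightarrow> 0) at_top"
  proof (rule Lim_null_comparison)
    show "\<forall>\<^sub>F T in at_top. norm ((1 / T) *\<^sub>R integral {0..T} g) \<le> (2 * norm K / \<bar>\<omega>\<bar>) / T"
      using eventually_gt_at_top[of "0::real"]
    proof eventually_elim
      case (elim T)
      have "(g has_integral (Fc (complex_of_real T) - Fc (complex_of_real 0))) {0..T}"
        using elim by (intro fundamental_theorem_of_calculus dF) auto
      then have "integral {0..T} g = Fc (complex_of_real T) - Fc (complex_of_real 0)" by (rule integral_unique)
      then have "norm ((1 / T) *\<^sub>R integral {0..T} g) = norm (Fc (complex_of_real T) - Fc (complex_of_real 0)) / T"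
        using elim by simp
      also have "\<dots> \<le> (2 * norm K / \<bar>\<omega>\<bar>) / T" using elim bnd by (intro divide_right_mono) auto
      finally show ?case .
    qed
    show "((\<lambda>T. 2 * norm K / \<bar>\<omega>\<bar> / T) \<longlongrightarrow> 0) at_top"
      by (intro tendsto_divide_0[OF tendsto_const] filterlim_at_top_imp_at_infinity filterlim_ident)
  qed
  then show ?thesis using False int unfolding has_avg_def g_def by simp
qed

lemma has_avg_cone:
  assumes "has_avg g L" "\<And>t. Im (g t) = 0" "\<And>t. Re (g t) \<ge> 0"
  shows "Im L = 0 \<and> Re L \<ge> 0"
proof -
  define C where "C = {z :: complex. Im z = 0 \<and> 0 \<le> Re z}"
  have cC: "closed C" unfolding C_def
    by (intro closed_Int closed_Collect_conj closed_Collect_eq closed_Collect_le continuous_intros)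
  have int: "g integrable_on {0..T}" for T using assms(1) unfolding has_avg_def by auto
  have "\<forall>\<^sub>F T in at_top. (1 / T) *\<^sub>R integral {0..T} g \<in> C"
    using eventually_gt_at_top[of "0::real"]
  proof eventually_elim
    case (elim T)
    have "Im (integral {0..T} g) = integral {0..T} (\<lambda>t. Im (g t))"
      using integral_linear[OF int bounded_linear_Im] by (simp add: o_def)
    also have "\<dots> = 0" using assms(2) by simp
    finally have i: "Im (integral {0..T} g) = 0" .
    have "Re (integral {0..T} g) = integral {0..T} (\<lambda>t. Re (g t))"
      using integral_linear[OF int bounded_linear_Re] by (simp add: o_def)
    also have "\<dots> \<ge> 0"
      using integrable_linear[OF int bounded_linear_Re] assms(3) by (intro integral_nonneg) (auto simp: o_def)
    finally have r: "Re (integral {0..T} g) \<ge> 0" .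
    show ?case unfolding C_def using i r elim by simp
  qed
  then have "L \<in> C" using assms(1) unfolding has_avg_def
    by (intro Lim_in_closed_set[OF cC]) auto
  then show ?thesis unfolding C_def by simp
qed

lemma kron_dim[simp]: "dim_row (kron A B) = dim_row A * dim_row B" "dim_col (kron A B) = dim_col A * dim_col B"
  unfolding kron_def by auto

lemma kron_carrier: "A \<in> carrier_mat n1 m1 \<Longrightarrow> B \<in> carrier_mat n2 m2 \<Longrightarrow> kron A B \<in> carrier_mat (n1 * n2) (m1 * m2)"
  by auto

lemma kron_entry: "i < dim_row A * dim_row B \<Longrightarrow> j < dim_col A * dim_col B \<Longrightarrow>
  kron A B $$ (i, j) = A $$ (i div dim_row B, j div dim_col B) * B $$ (i mod dim_row B, j mod dim_col B)"
  unfolding kron_def by simp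

lemma kron_entry':
  assumes "A \<in> carrier_mat n1 m1" "B \<in> carrier_mat n2 m2" "i < n1 * n2" "j < m1 * m2"
  shows "kron A B $$ (i, j) = A $$ (i div n2, j div m2) * B $$ (i mod n2, j mod m2)"
  using assms unfolding kron_def by simp

lemma idx_lt: "r < (m::nat) \<Longrightarrow> s < n \<Longrightarrow> r * n + s < m * n"
proof -
  assume "r < m" "s < n"
  then have "r * n + s < r * n + n" by simp
  also have "\<dots> = Suc r * n" by simp
  also have "\<dots> \<le> m * n" using \<open>r < m\<close> by (intro mult_le_mono1) simp
  finally show ?thesis .
qed

lemma trip_entry:
  assumes "A \<in> carrier_mat n n" "M \<in> carrier_mat n n" "B \<in> carrier_mat n n" "x < n" "y < n"
  shows "(A * M * B) $$ (x, y) = (\<Sum>p<n. \<Sum>q<n. A $$ (x, p) * M $$ (p, q) * B $$ (q, y))"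
proof -
  have "(A * M * B) $$ (x, y) = (\<Sum>q<n. (A * M) $$ (x, q) * B $$ (q, y))"
    using assms by (intro mult_entry) auto
  also have "\<dots> = (\<Sum>q<n. (\<Sum>p<n. A $$ (x, p) * M $$ (p, q)) * B $$ (q, y))"
    using assms by (intro sum.cong refl) (subst mult_entry, auto)
  also have "\<dots> = (\<Sum>p<n. \<Sum>q<n. A $$ (x, p) * M $$ (p, q) * B $$ (q, y))"
    by (simp only: sum_distrib_right, subst sum.swap, rule refl)
  finally show ?thesis .
qed

lemma lt_mult_div: "i < m * (n::nat) \<Longrightarrow> i div n < m"
  by (simp add: less_mult_imp_div_less)

lemma lt_mult_mod: "i < m * (n::nat) \<Longrightarrow> i mod n < n"
  by (metis mod_less_divisor mult_0_right not_less0 zero_less_iff_neq_zero)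

lemma kron_mult:
  assumes "A1 \<in> carrier_mat dR dR" "A2 \<in> carrier_mat dR dR" "B1 \<in> carrier_mat dS dS" "B2 \<in> carrier_mat dS dS"
  shows "kron A1 B1 * kron A2 B2 = kron (A1 * A2) (B1 * B2)"
proof (rule eq_matI)
  fix i j assume "i < dim_row (kron (A1 * A2) (B1 * B2))" "j < dim_col (kron (A1 * A2) (B1 * B2))"
  then have ij: "i < dR * dS" "j < dR * dS" using assms by auto
  have "(kron A1 B1 * kron A2 B2) $$ (i, j) = (\<Sum>l<dR * dS. kron A1 B1 $$ (i, l) * kron A2 B2 $$ (l, j))"
    using assms ij by (intro mult_entry[of _ _ "dR * dS"]) auto
  also have "\<dots> = (\<Sum>r<dR. \<Sum>s<dS. (A1 $$ (i div dS, r) * A2 $$ (r, j div dS)) * (B1 $$ (i mod dS, s) * B2 $$ (s, j mod dS)))"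
    using assms ij by (intro sum_mult_split_divmod) (auto simp: kron_entry'[OF assms(1,3)] kron_entry'[OF assms(2,4)] idx_lt lt_mult_div lt_mult_mod mult_ac)
  also have "\<dots> = (A1 * A2) $$ (i div dS, j div dS) * (B1 * B2) $$ (i mod dS, j mod dS)"
    by (simp add: mult_entry[OF assms(1,2) lt_mult_div[OF ij(1)] lt_mult_div[OF ij(2)]]
        mult_entry[OF assms(3,4) lt_mult_mod[OF ij(1)] lt_mult_mod[OF ij(2)]] sum_product)
  also have "\<dots> = kron (A1 * A2) (B1 * B2) $$ (i, j)"
    using assms ij by (simp add: kron_entry'[of _ dR dR _ dS dS])
  finally show "(kron A1 B1 * kron A2 B2) $$ (i, j) = kron (A1 * A2) (B1 * B2) $$ (i, j)" .
qed (use assms in auto)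

lemma kron_entry_rs:
  assumes "A \<in> carrier_mat n1 m1" "B \<in> carrier_mat n2 m2" "r < n1" "x < n2" "r1 < m1" "x1 < m2"
  shows "kron A B $$ (r * n2 + x, r1 * m2 + x1) = A $$ (r, r1) * B $$ (x, x1)"
  using assms by (subst kron_entry'[OF assms(1,2)]) (auto simp: idx_lt)

lemma kron_entry_rs':
  assumes "A \<in> carrier_mat n1 m1" "B \<in> carrier_mat n2 m2" "r < n1" "x < n2" "r1 < m1" "x1 < m2"
  shows "kron A B $$ (n2 * r + x, r1 * m2 + x1) = A $$ (r, r1) * B $$ (x, x1)"
    "kron A B $$ (r * n2 + x, m2 * r1 + x1) = A $$ (r, r1) * B $$ (x, x1)"
    "kron A B $$ (n2 * r + x, m2 * r1 + x1) = A $$ (r, r1) * B $$ (x, x1)"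
  using kron_entry_rs[OF assms] by (simp_all add: mult.commute)

lemma kron_trip_entry:
  assumes A: "A \<in> carrier_mat dR dR" "A' \<in> carrier_mat dR dR"
    and B: "B \<in> carrier_mat dS dS" "B' \<in> carrier_mat dS dS"
    and M: "M \<in> carrier_mat (dR * dS) (dR * dS)"
    and idx: "r < dR" "r' < dR" "x < dS" "y < dS"
  shows "(kron A B * M * kron A' B') $$ (r * dS + x, r' * dS + y) =
    (\<Sum>r1<dR. \<Sum>x1<dS. \<Sum>r2<dR. \<Sum>y2<dS.
       A $$ (r, r1) * B $$ (x, x1) * M $$ (r1 * dS + x1, r2 * dS + y2) * A' $$ (r2, r') * B' $$ (y2, y))"
proof -
  have K: "kron A B \<in> carrier_mat (dR * dS) (dR * dS)" "kron A' B' \<in> carrier_mat (dR * dS) (dR * dS)"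
    using A B by auto
  have "(kron A B * M * kron A' B') $$ (r * dS + x, r' * dS + y) =
     (\<Sum>p<dR * dS. \<Sum>q<dR * dS. kron A B $$ (r * dS + x, p) * M $$ (p, q) * kron A' B' $$ (q, r' * dS + y))"
    using K M idx by (intro trip_entry) (auto simp: idx_lt)
  also have "\<dots> = (\<Sum>r1<dR. \<Sum>x1<dS. \<Sum>r2<dR. \<Sum>y2<dS.
       A $$ (r, r1) * B $$ (x, x1) * M $$ (r1 * dS + x1, r2 * dS + y2) * A' $$ (r2, r') * B' $$ (y2, y))"
    unfolding sum_mult_split
    by (intro sum.cong refl) (use A B idx in \<open>auto simp add: kron_entry_rs[OF A(1) B(1)] kron_entry_rs[OF A(2) B(2)] kron_entry_rs'[OF A(1) B(1)] kron_entry_rs'[OF A(2) B(2)] mult_ac\<close>)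
  finally show ?thesis .
qed

lemma sum_swap5: "(\<Sum>s\<in>S. \<Sum>a\<in>A. \<Sum>b\<in>B. \<Sum>c\<in>C. \<Sum>d\<in>D. f s a b c d) =
  (\<Sum>a\<in>A. \<Sum>b\<in>B. \<Sum>c\<in>C. \<Sum>d\<in>D. \<Sum>s\<in>S. f s a b c d)"
proof -
  have "(\<Sum>s\<in>S. \<Sum>a\<in>A. \<Sum>b\<in>B. \<Sum>c\<in>C. \<Sum>d\<in>D. f s a b c d) = (\<Sum>a\<in>A. \<Sum>s\<in>S. \<Sum>b\<in>B. \<Sum>c\<in>C. \<Sum>d\<in>D. f s a b c d)"
    by (rule sum.swap)
  also have "\<dots> = (\<Sum>a\<in>A. \<Sum>b\<in>B. \<Sum>s\<in>S. \<Sum>c\<in>C. \<Sum>d\<in>D. f s a b c d)"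
    by (intro sum.cong refl) (rule sum.swap)
  also have "\<dots> = (\<Sum>a\<in>A. \<Sum>b\<in>B. \<Sum>c\<in>C. \<Sum>s\<in>S. \<Sum>d\<in>D. f s a b c d)"
    by (intro sum.cong refl) (rule sum.swap)
  also have "\<dots> = (\<Sum>a\<in>A. \<Sum>b\<in>B. \<Sum>c\<in>C. \<Sum>d\<in>D. \<Sum>s\<in>S. f s a b c d)"
    by (intro sum.cong refl) (rule sum.swap)
  finally show ?thesis .
qed

lemma sum_delta_outer:
  assumes "r1 \<in> R" "finite R"
  shows "(\<Sum>r2\<in>R. \<Sum>y\<in>Y. if r2 = r1 then F r2 y else 0) = (\<Sum>y\<in>Y. F r1 y)"
proof -
  have "(\<Sum>y\<in>Y. if r2 = r1 then F r2 y else 0) = (if r2 = r1 then (\<Sum>y\<in>Y. F r2 y) else 0)" for r2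
    by simp
  then show ?thesis using assms by simp
qed

lemma ptrace_S_kron:
  assumes A: "A \<in> carrier_mat dR dR" "A' \<in> carrier_mat dR dR"
    and B: "B \<in> carrier_mat dS dS" "B' \<in> carrier_mat dS dS"
    and M: "M \<in> carrier_mat (dR * dS) (dR * dS)" and BB: "B' * B = 1\<^sub>m dS"
  shows "ptrace_S dR dS (kron A B * M * kron A' B') = A * ptrace_S dR dS M * A'"
proof (rule eq_matI)
  have P: "ptrace_S dR dS M \<in> carrier_mat dR dR" unfolding ptrace_S_def by simp
  fix a b assume "a < dim_row (A * ptrace_S dR dS M * A')" "b < dim_col (A * ptrace_S dR dS M * A')"
  then have ab: "a < dR" "b < dR" using A by auto
  have BBe: "(\<Sum>s<dS. B' $$ (y, s) * B $$ (s, x)) = (if y = x then 1 else 0)" if "x < dS" "y < dS" for x y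
    using arg_cong[OF BB, of "\<lambda>m. m $$ (y, x)"] that B mult_entry[OF B(2) B(1) that(2) that(1)] by simp
  have "ptrace_S dR dS (kron A B * M * kron A' B') $$ (a, b) =
     (\<Sum>s<dS. (kron A B * M * kron A' B') $$ (a * dS + s, b * dS + s))"
    unfolding ptrace_S_def using ab by simp
  also have "\<dots> = (\<Sum>s<dS. \<Sum>r1<dR. \<Sum>x1<dS. \<Sum>r2<dR. \<Sum>y2<dS.
       A $$ (a, r1) * B $$ (s, x1) * M $$ (r1 * dS + x1, r2 * dS + y2) * A' $$ (r2, b) * B' $$ (y2, s))"
    using ab by (intro sum.cong refl kron_trip_entry[OF A B M]) auto
  also have "\<dots> = (\<Sum>r1<dR. \<Sum>x1<dS. \<Sum>r2<dR. \<Sum>y2<dS.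
       A $$ (a, r1) * M $$ (r1 * dS + x1, r2 * dS + y2) * A' $$ (r2, b) * (\<Sum>s<dS. B' $$ (y2, s) * B $$ (s, x1)))"
    by (subst sum_swap5, intro sum.cong refl, simp add: sum_distrib_left mult_ac)
  also have "\<dots> = (\<Sum>r1<dR. \<Sum>x1<dS. \<Sum>r2<dR. \<Sum>y2<dS.
       (if y2 = x1 then A $$ (a, r1) * M $$ (r1 * dS + x1, r2 * dS + y2) * A' $$ (r2, b) else 0))"
    by (intro sum.cong refl) (simp add: BBe)
  also have "\<dots> = (\<Sum>r1<dR. \<Sum>x1<dS. \<Sum>r2<dR. A $$ (a, r1) * M $$ (r1 * dS + x1, r2 * dS + x1) * A' $$ (r2, b))"
    by (intro sum.cong refl) simp
  also have "\<dots> = (\<Sum>r1<dR. \<Sum>r2<dR. A $$ (a, r1) * ptrace_S dR dS M $$ (r1, r2) * A' $$ (r2, b))"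
    by (intro sum.cong[OF refl], subst sum.swap, intro sum.cong[OF refl]) (auto simp: ptrace_S_def sum_distrib_left sum_distrib_right)
  also have "\<dots> = (A * ptrace_S dR dS M * A') $$ (a, b)"
    using ab A P by (intro trip_entry[symmetric]) auto
  finally show "ptrace_S dR dS (kron A B * M * kron A' B') $$ (a, b) = (A * ptrace_S dR dS M * A') $$ (a, b)" .
qed (use A in \<open>auto simp: ptrace_S_def\<close>)

lemma ptrace_R_kron:
  assumes A: "A \<in> carrier_mat dR dR" "A' \<in> carrier_mat dR dR"
    and B: "B \<in> carrier_mat dS dS" "B' \<in> carrier_mat dS dS"
    and M: "M \<in> carrier_mat (dR * dS) (dR * dS)" and AA: "A' * A = 1\<^sub>m dR"
  shows "ptrace_R dR dS (kron A B * M * kron A' B') = B * ptrace_R dR dS M * B'"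
proof (rule eq_matI)
  have P: "ptrace_R dR dS M \<in> carrier_mat dS dS" unfolding ptrace_R_def by simp
  fix p q assume "p < dim_row (B * ptrace_R dR dS M * B')" "q < dim_col (B * ptrace_R dR dS M * B')"
  then have pq: "p < dS" "q < dS" using B by auto
  have AAe: "(\<Sum>r<dR. A' $$ (y, r) * A $$ (r, x)) = (if y = x then 1 else 0)" if "x < dR" "y < dR" for x y
    using arg_cong[OF AA, of "\<lambda>m. m $$ (y, x)"] that A mult_entry[OF A(2) A(1) that(2) that(1)] by simp
  have "ptrace_R dR dS (kron A B * M * kron A' B') $$ (p, q) =
     (\<Sum>r<dR. (kron A B * M * kron A' B') $$ (r * dS + p, r * dS + q))"
    unfolding ptrace_R_def using pq by simp
  also have "\<dots> = (\<Sum>r<dR. \<Sum>r1<dR. \<Sum>x1<dS. \<Sum>r2<dR. \<Sum>y2<dS.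
       A $$ (r, r1) * B $$ (p, x1) * M $$ (r1 * dS + x1, r2 * dS + y2) * A' $$ (r2, r) * B' $$ (y2, q))"
    using pq by (intro sum.cong refl kron_trip_entry[OF A B M]) auto
  also have "\<dots> = (\<Sum>r1<dR. \<Sum>x1<dS. \<Sum>r2<dR. \<Sum>y2<dS.
       B $$ (p, x1) * M $$ (r1 * dS + x1, r2 * dS + y2) * B' $$ (y2, q) * (\<Sum>r<dR. A' $$ (r2, r) * A $$ (r, r1)))"
    by (subst sum_swap5, intro sum.cong refl, simp add: sum_distrib_left mult_ac)
  also have "\<dots> = (\<Sum>r1<dR. \<Sum>x1<dS. \<Sum>r2<dR. \<Sum>y2<dS.
       (if r2 = r1 then B $$ (p, x1) * M $$ (r1 * dS + x1, r2 * dS + y2) * B' $$ (y2, q) else 0))"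
    by (intro sum.cong refl) (simp add: AAe)
  also have "\<dots> = (\<Sum>r1<dR. \<Sum>x1<dS. \<Sum>y2<dS. B $$ (p, x1) * M $$ (r1 * dS + x1, r1 * dS + y2) * B' $$ (y2, q))"
    by (intro sum.cong[OF refl], rule sum_delta_outer) auto
  also have "\<dots> = (\<Sum>x1<dS. \<Sum>y2<dS. \<Sum>r1<dR. B $$ (p, x1) * M $$ (r1 * dS + x1, r1 * dS + y2) * B' $$ (y2, q))"
    by (subst sum.swap, intro sum.cong[OF refl], subst sum.swap, rule refl)
  also have "\<dots> = (\<Sum>x1<dS. \<Sum>y2<dS. B $$ (p, x1) * ptrace_R dR dS M $$ (x1, y2) * B' $$ (y2, q))"
    by (intro sum.cong[OF refl]) (auto simp: ptrace_R_def sum_distrib_left sum_distrib_right)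
  also have "\<dots> = (B * ptrace_R dR dS M * B') $$ (p, q)"
    using pq B P by (intro trip_entry[symmetric]) auto
  finally show "ptrace_R dR dS (kron A B * M * kron A' B') $$ (p, q) = (B * ptrace_R dR dS M * B') $$ (p, q)" .
qed (use B in \<open>auto simp: ptrace_R_def\<close>)

definition wv :: "nat \<Rightarrow> (nat \<Rightarrow> nat \<Rightarrow> complex) \<Rightarrow> (nat \<Rightarrow> nat \<Rightarrow> complex) \<Rightarrow> nat \<Rightarrow> nat \<Rightarrow> complex" where
  "wv dS uR uS a i = uR (a div dS) (i div dS) * uS (a mod dS) (i mod dS)"

lemma kron_spm:
  "kron (spm dR uR \<alpha>) (spm dS uS \<beta>) = spm (dR * dS) (wv dS uR uS) (\<lambda>a. \<alpha> (a div dS) * \<beta> (a mod dS))"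
proof (rule eq_matI)
  fix i j assume "i < dim_row (spm (dR * dS) (wv dS uR uS) (\<lambda>a. \<alpha> (a div dS) * \<beta> (a mod dS)))"
    "j < dim_col (spm (dR * dS) (wv dS uR uS) (\<lambda>a. \<alpha> (a div dS) * \<beta> (a mod dS)))"
  then have ij: "i < dR * dS" "j < dR * dS" by auto
  have "kron (spm dR uR \<alpha>) (spm dS uS \<beta>) $$ (i, j) = spm dR uR \<alpha> $$ (i div dS, j div dS) * spm dS uS \<beta> $$ (i mod dS, j mod dS)"
    using ij by (intro kron_entry') auto
  also have "\<dots> = (\<Sum>r<dR. \<Sum>s<dS. (\<alpha> r * uR r (i div dS) * cnj (uR r (j div dS))) * (\<beta> s * uS s (i mod dS) * cnj (uS s (j mod dS))))"
    using ij by (simp add: lt_mult_div lt_mult_mod sum_product)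
  also have "\<dots> = spm (dR * dS) (wv dS uR uS) (\<lambda>a. \<alpha> (a div dS) * \<beta> (a mod dS)) $$ (i, j)"
    using ij unfolding spm_entry[OF ij] wv_def by (intro sum_mult_split_divmod[symmetric]) (auto simp: mult_ac)
  finally show "kron (spm dR uR \<alpha>) (spm dS uS \<beta>) $$ (i, j) = spm (dR * dS) (wv dS uR uS) (\<lambda>a. \<alpha> (a div dS) * \<beta> (a mod dS)) $$ (i, j)" .
qed auto

lemma orthn_wv:
  assumes oR: "orthn dR dR uR" and oS: "orthn dS dS uS"
  shows "orthn (dR * dS) (dR * dS) (wv dS uR uS)"
  unfolding orthn_def
proof (intro allI impI)
  fix a b assume ab: "a < dR * dS" "b < dR * dS"
  have "ip (dR * dS) (wv dS uR uS a) (wv dS uR uS b) =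
    ip dR (uR (a div dS)) (uR (b div dS)) * ip dS (uS (a mod dS)) (uS (b mod dS))"
    unfolding ip_def sum_product wv_def by (intro sum_mult_split_divmod) (auto simp: mult_ac)
  also have "\<dots> = (if a div dS = b div dS then 1 else 0) * (if a mod dS = b mod dS then 1 else 0)"
    using oR oS ab unfolding orthn_def by (simp add: lt_mult_div lt_mult_mod)
  also have "\<dots> = (if a = b then 1 else 0)"
  proof -
    have "(a div dS = b div dS \<and> a mod dS = b mod dS) \<longleftrightarrow> a = b"
      by (metis div_mult_mod_eq)
    then show ?thesis by auto
  qed
  finally show "ip (dR * dS) (wv dS uR uS a) (wv dS uR uS b) = (if a = b then 1 else 0)" .
qed

lemma sum_swap4: "(\<Sum>k\<in>K. \<Sum>l\<in>L. \<Sum>a\<in>A. \<Sum>b\<in>B. f k l a b) = (\<Sum>a\<in>A. \<Sum>b\<in>B. \<Sum>k\<in>K. \<Sum>l\<in>L. f k l a b)"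
proof -
  have "(\<Sum>k\<in>K. \<Sum>l\<in>L. \<Sum>a\<in>A. \<Sum>b\<in>B. f k l a b) = (\<Sum>k\<in>K. \<Sum>a\<in>A. \<Sum>l\<in>L. \<Sum>b\<in>B. f k l a b)"
    by (intro sum.cong refl) (rule sum.swap)
  also have "\<dots> = (\<Sum>a\<in>A. \<Sum>k\<in>K. \<Sum>l\<in>L. \<Sum>b\<in>B. f k l a b)" by (rule sum.swap)
  also have "\<dots> = (\<Sum>a\<in>A. \<Sum>k\<in>K. \<Sum>b\<in>B. \<Sum>l\<in>L. f k l a b)"
    by (intro sum.cong refl) (rule sum.swap)
  also have "\<dots> = (\<Sum>a\<in>A. \<Sum>b\<in>B. \<Sum>k\<in>K. \<Sum>l\<in>L. f k l a b)"
    by (intro sum.cong refl) (rule sum.swap)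
  finally show ?thesis .
qed

definition cf :: "nat \<Rightarrow> (nat \<Rightarrow> nat \<Rightarrow> complex) \<Rightarrow> complex mat \<Rightarrow> nat \<Rightarrow> nat \<Rightarrow> complex" where
  "cf n u M a b = (\<Sum>k<n. \<Sum>l<n. cnj (u a k) * M $$ (k, l) * u b l)"

lemma sum_mult_sum: "(\<Sum>a\<in>A. f a) * m * (\<Sum>b\<in>B. g b) = (\<Sum>a\<in>A. \<Sum>b\<in>B. f a * m * (g b :: 'a :: semiring_0))"
  by (simp only: sum_distrib_right[of f A m] sum_product)

lemma spm_trip:
  assumes M: "M \<in> carrier_mat n n" and ij: "i < n" "j < n"
  shows "(spm n u \<alpha> * M * spm n u \<beta>) $$ (i, j) =
    (\<Sum>a<n. \<Sum>b<n. \<alpha> a * \<beta> b * u a i * cnj (u b j) * cf n u M a b)"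
proof -
  have "(spm n u \<alpha> * M * spm n u \<beta>) $$ (i, j) =
    (\<Sum>k<n. \<Sum>l<n. spm n u \<alpha> $$ (i, k) * M $$ (k, l) * spm n u \<beta> $$ (l, j))"
    using M ij by (intro trip_entry) auto
  also have "\<dots> = (\<Sum>k<n. \<Sum>l<n. \<Sum>a<n. \<Sum>b<n. (\<alpha> a * u a i * cnj (u a k)) * M $$ (k, l) * (\<beta> b * u b l * cnj (u b j)))"
    using ij by (intro sum.cong refl) (simp only: spm_entry sum_mult_sum lessThan_iff)
  also have "\<dots> = (\<Sum>a<n. \<Sum>b<n. \<Sum>k<n. \<Sum>l<n. (\<alpha> a * u a i * cnj (u a k)) * M $$ (k, l) * (\<beta> b * u b l * cnj (u b j)))"
    by (rule sum_swap4)
  also have "\<dots> = (\<Sum>a<n. \<Sum>b<n. \<alpha> a * \<beta> b * u a i * cnj (u b j) * cf n u M a b)"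
    unfolding cf_def by (intro sum.cong refl) (simp add: sum_distrib_left mult_ac)
  finally show ?thesis .
qed

lemma lin_expand:
  fixes E :: "complex mat \<Rightarrow> complex mat"
  assumes Ec: "\<forall>X\<in>carrier_mat N N. E X \<in> carrier_mat N N"
    and Ea: "\<forall>X\<in>carrier_mat N N. \<forall>Y\<in>carrier_mat N N. E (X + Y) = E X + E Y"
    and Es: "\<forall>X\<in>carrier_mat N N. \<forall>c. E (c \<cdot>\<^sub>m X) = c \<cdot>\<^sub>m E X"
    and S: "finite S" and B: "\<forall>s\<in>S. B s \<in> carrier_mat N N" and pq: "p < N" "q < N"
  shows "E (mat N N (\<lambda>(i, j). \<Sum>s\<in>S. \<gamma> s * B s $$ (i, j))) $$ (p, q) = (\<Sum>s\<in>S. \<gamma> s * E (B s) $$ (p, q))"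
  using S B
proof (induction S rule: finite_induct)
  case empty
  have z: "mat N N (\<lambda>(i, j). \<Sum>s\<in>{}. \<gamma> s * B s $$ (i, j)) = 0 \<cdot>\<^sub>m 0\<^sub>m N N"
    by (rule eq_matI) auto
  have "E (0 \<cdot>\<^sub>m 0\<^sub>m N N) = 0 \<cdot>\<^sub>m E (0\<^sub>m N N)" by (rule Es[rule_format]) auto
  moreover have "0 \<cdot>\<^sub>m 0\<^sub>m N N = (0\<^sub>m N N :: complex mat)" by auto
  moreover have "E (0\<^sub>m N N) \<in> carrier_mat N N" using Ec by auto
  ultimately have E0: "E (0\<^sub>m N N) = 0 \<cdot>\<^sub>m E (0\<^sub>m N N)" "E (0\<^sub>m N N) \<in> carrier_mat N N" by auto
  have "E (0\<^sub>m N N) $$ (p, q) = (0 \<cdot>\<^sub>m E (0\<^sub>m N N)) $$ (p, q)" using E0(1) by simp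
  also have "\<dots> = 0" using E0(2) pq by simp
  finally show ?case unfolding z \<open>0 \<cdot>\<^sub>m 0\<^sub>m N N = 0\<^sub>m N N\<close> by simp
next
  case (insert x F)
  define MF where "MF = mat N N (\<lambda>(i, j). \<Sum>s\<in>F. \<gamma> s * B s $$ (i, j))"
  have eq: "mat N N (\<lambda>(i, j). \<Sum>s\<in>insert x F. \<gamma> s * B s $$ (i, j)) = \<gamma> x \<cdot>\<^sub>m B x + MF"
    unfolding MF_def using insert by (intro eq_matI) auto
  have Bx: "B x \<in> carrier_mat N N" using insert by auto
  have MFc: "MF \<in> carrier_mat N N" unfolding MF_def by auto
  have "E (\<gamma> x \<cdot>\<^sub>m B x + MF) = E (\<gamma> x \<cdot>\<^sub>m B x) + E MF" using Ea Bx MFc by auto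
  also have "E (\<gamma> x \<cdot>\<^sub>m B x) = \<gamma> x \<cdot>\<^sub>m E (B x)" using Es Bx by auto
  finally have "E (\<gamma> x \<cdot>\<^sub>m B x + MF) = \<gamma> x \<cdot>\<^sub>m E (B x) + E MF" .
  moreover have "E (B x) \<in> carrier_mat N N" "E MF \<in> carrier_mat N N" using Ec Bx MFc by auto
  ultimately have "E (\<gamma> x \<cdot>\<^sub>m B x + MF) $$ (p, q) = \<gamma> x * E (B x) $$ (p, q) + E MF $$ (p, q)"
    using pq by simp
  moreover have "E MF $$ (p, q) = (\<Sum>s\<in>F. \<gamma> s * E (B s) $$ (p, q))"
  proof -
    have "(\<lambda>(i, j). \<Sum>s\<in>F. \<gamma> s * B s $$ (i, j)) = (\<lambda>a. \<Sum>s\<in>F. \<gamma> s * B s $$ a)" by auto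
    then show ?thesis unfolding MF_def using insert by simp
  qed
  ultimately show ?case unfolding eq using insert by simp
qed

lemma assoc5:
  assumes "A \<in> carrier_mat n n" "B \<in> carrier_mat n n" "C \<in> carrier_mat n n" "D \<in> carrier_mat n n" "E \<in> carrier_mat n n"
  shows "A * (B * C * D) * E = (A * B) * C * (D * E)"
  using assms by (simp add: assoc_mult_mat[of _ n n _ n _ n] mult_carrier_mat[of _ n n _ n])

lemma spm_apply:
  assumes o: "orthn n n u" and m: "m < n" and b: "b < n"
  shows "(\<Sum>l<n. spm n u \<beta> $$ (m, l) * u b l) = \<beta> b * u b m"
proof -
  have "(\<Sum>l<n. spm n u \<beta> $$ (m, l) * u b l) = (\<Sum>c<n. \<beta> c * u c m * ip n (u c) (u b))"
    unfolding ip_def using m by (simp add: sum_distrib_left sum_distrib_right mult_ac, subst sum.swap, simp)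
  also have "\<dots> = (\<Sum>c<n. if c = b then \<beta> c * u c m else 0)"
    using o b unfolding orthn_def by (intro sum.cong refl) auto
  also have "\<dots> = \<beta> b * u b m" using b by simp
  finally show ?thesis .
qed

lemma spm_apply_left:
  assumes o: "orthn n n u" and m: "m < n" and a: "a < n"
  shows "(\<Sum>k<n. cnj (u a k) * spm n u \<alpha> $$ (k, m)) = \<alpha> a * cnj (u a m)"
proof -
  have "(\<Sum>k<n. cnj (u a k) * spm n u \<alpha> $$ (k, m)) = (\<Sum>c<n. \<alpha> c * cnj (u c m) * ip n (u a) (u c))"
    unfolding ip_def using m by (simp add: sum_distrib_left sum_distrib_right mult_ac, subst sum.swap, simp)
  also have "\<dots> = (\<Sum>c<n. if c = a then \<alpha> c * cnj (u c m) else 0)"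
    using o a unfolding orthn_def by (intro sum.cong refl) auto
  also have "\<dots> = \<alpha> a * cnj (u a m)" using a by simp
  finally show ?thesis .
qed

lemma cf_mult_right:
  assumes o: "orthn n n u" and M: "M \<in> carrier_mat n n" and ab: "a < n" "b < n"
  shows "cf n u (M * spm n u \<beta>) a b = \<beta> b * cf n u M a b"
proof -
  have "cf n u (M * spm n u \<beta>) a b = (\<Sum>k<n. \<Sum>l<n. cnj (u a k) * (\<Sum>m<n. M $$ (k, m) * spm n u \<beta> $$ (m, l)) * u b l)"
    unfolding cf_def using M by (intro sum.cong refl arg_cong2[where f = "(*)"] refl) (subst mult_entry[OF M spm_carrier], auto)
  also have "\<dots> = (\<Sum>k<n. \<Sum>m<n. cnj (u a k) * M $$ (k, m) * (\<Sum>l<n. spm n u \<beta> $$ (m, l) * u b l))"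
    by (rule sum.cong[OF refl], simp add: sum_distrib_left sum_distrib_right mult_ac, subst sum.swap, simp add: mult_ac)
  also have "\<dots> = (\<Sum>k<n. \<Sum>m<n. cnj (u a k) * M $$ (k, m) * (\<beta> b * u b m))"
    using spm_apply[OF o _ ab(2)] by (intro sum.cong refl) auto
  also have "\<dots> = \<beta> b * cf n u M a b"
    unfolding cf_def by (simp add: sum_distrib_left mult_ac)
  finally show ?thesis .
qed

lemma cf_mult_left:
  assumes o: "orthn n n u" and M: "M \<in> carrier_mat n n" and ab: "a < n" "b < n"
  shows "cf n u (spm n u \<alpha> * M) a b = \<alpha> a * cf n u M a b"
proof -
  have "cf n u (spm n u \<alpha> * M) a b = (\<Sum>k<n. \<Sum>l<n. cnj (u a k) * (\<Sum>m<n. spm n u \<alpha> $$ (k, m) * M $$ (m, l)) * u b l)"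
    unfolding cf_def using M by (intro sum.cong refl arg_cong2[where f = "(*)"] refl) (subst mult_entry[OF spm_carrier M], auto)
  also have "\<dots> = (\<Sum>l<n. \<Sum>k<n. \<Sum>m<n. cnj (u a k) * spm n u \<alpha> $$ (k, m) * M $$ (m, l) * u b l)"
    by (subst sum.swap) (simp add: sum_distrib_left sum_distrib_right mult_ac)
  also have "\<dots> = (\<Sum>l<n. \<Sum>m<n. (\<Sum>k<n. cnj (u a k) * spm n u \<alpha> $$ (k, m)) * M $$ (m, l) * u b l)"
    by (rule sum.cong[OF refl], simp add: sum_distrib_right, subst sum.swap, simp add: mult_ac)
  also have "\<dots> = (\<Sum>l<n. \<Sum>m<n. \<alpha> a * cnj (u a m) * M $$ (m, l) * u b l)"
    using spm_apply_left[OF o _ ab(1)] by (intro sum.cong refl) auto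
  also have "\<dots> = \<alpha> a * cf n u M a b"
    unfolding cf_def by (subst sum.swap) (simp add: sum_distrib_left mult_ac)
  finally show ?thesis .
qed

lemma spm_expand:
  assumes o: "orthn n n u" and M: "M \<in> carrier_mat n n" and ij: "i < n" "j < n"
  shows "M $$ (i, j) = (\<Sum>a<n. \<Sum>b<n. u a i * cnj (u b j) * cf n u M a b)"
proof -
  have "M = spm n u (\<lambda>a. 1) * M * spm n u (\<lambda>a. 1)" using spm_one[OF o] M by simp
  then have "M $$ (i, j) = (spm n u (\<lambda>a. 1) * M * spm n u (\<lambda>a. 1)) $$ (i, j)" by simp
  also have "\<dots> = (\<Sum>a<n. \<Sum>b<n. u a i * cnj (u b j) * cf n u M a b)"
    using spm_trip[OF M ij] by simp
  finally show ?thesis .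
qed

lemma commute_spm:
  assumes o: "orthn n n u" and M: "M \<in> carrier_mat n n"
    and comm: "M * spm n u (\<lambda>a. complex_of_real (l a)) = spm n u (\<lambda>a. complex_of_real (l a)) * M"
  shows "M * spm n u (\<lambda>a. f (l a)) = spm n u (\<lambda>a. f (l a)) * M"
proof -
  have Z: "(f (l a) - f (l b)) * cf n u M a b = 0" if ab: "a < n" "b < n" for a b
  proof -
    have "complex_of_real (l b) * cf n u M a b = complex_of_real (l a) * cf n u M a b"
      using arg_cong[OF comm, of "\<lambda>X. cf n u X a b"] cf_mult_right[OF o M ab] cf_mult_left[OF o M ab] by simp
    then have "l a = l b \<or> cf n u M a b = 0" by auto
    then show ?thesis by (cases "cf n u M a b = 0") auto
  qed
  show ?thesis
  proof (rule eq_matI)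
    fix i j assume "i < dim_row (spm n u (\<lambda>a. f (l a)) * M)" "j < dim_col (spm n u (\<lambda>a. f (l a)) * M)"
    then have ij: "i < n" "j < n" using M by auto
    have e1: "(M * spm n u (\<lambda>a. f (l a))) $$ (i, j) = (\<Sum>a<n. \<Sum>b<n. u a i * cnj (u b j) * cf n u (M * spm n u (\<lambda>a. f (l a))) a b)"
      using M by (intro spm_expand[OF o _ ij]) auto
    have e2: "(spm n u (\<lambda>a. f (l a)) * M) $$ (i, j) = (\<Sum>a<n. \<Sum>b<n. u a i * cnj (u b j) * cf n u (spm n u (\<lambda>a. f (l a)) * M) a b)"
      using M by (intro spm_expand[OF o _ ij]) auto
    show "(M * spm n u (\<lambda>a. f (l a))) $$ (i, j) = (spm n u (\<lambda>a. f (l a)) * M) $$ (i, j)"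
      unfolding e1 e2
    proof (intro sum.cong refl)
      fix a b assume "a \<in> {..<n}" "b \<in> {..<n}"
      then have ab: "a < n" "b < n" by auto
      show "u a i * cnj (u b j) * cf n u (M * spm n u (\<lambda>a. f (l a))) a b = u a i * cnj (u b j) * cf n u (spm n u (\<lambda>a. f (l a)) * M) a b"
      proof (cases "cf n u M a b = 0")
        case False
        then have "f (l a) = f (l b)" using Z[OF ab] by simp
        then show ?thesis unfolding cf_mult_right[OF o M ab] cf_mult_left[OF o M ab] by simp
      qed (simp add: cf_mult_right[OF o M ab] cf_mult_left[OF o M ab])
    qed
  qed (use M in auto)
qed

lemma cf_lin:
  assumes "\<And>k l. k < n \<Longrightarrow> l < n \<Longrightarrow> M $$ (k, l) = (\<Sum>s\<in>S. \<gamma> s * B s $$ (k, l))"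
  shows "cf n u M a b = (\<Sum>s\<in>S. \<gamma> s * cf n u (B s) a b)"
proof -
  have "cf n u M a b = (\<Sum>k<n. \<Sum>l<n. \<Sum>s\<in>S. cnj (u a k) * (\<gamma> s * B s $$ (k, l)) * u b l)"
    unfolding cf_def using assms by (intro sum.cong refl) (simp add: sum_distrib_left sum_distrib_right)
  also have "\<dots> = (\<Sum>k<n. \<Sum>s\<in>S. \<Sum>l<n. cnj (u a k) * (\<gamma> s * B s $$ (k, l)) * u b l)"
    by (intro sum.cong refl) (rule sum.swap)
  also have "\<dots> = (\<Sum>s\<in>S. \<Sum>k<n. \<Sum>l<n. cnj (u a k) * (\<gamma> s * B s $$ (k, l)) * u b l)"
    by (rule sum.swap)
  also have "\<dots> = (\<Sum>s\<in>S. \<gamma> s * cf n u (B s) a b)"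
    unfolding cf_def by (simp add: sum_distrib_left mult_ac)
  finally show ?thesis .
qed

lemma sum_prod_split: "(\<Sum>s\<in>A \<times> B. f s) = (\<Sum>c\<in>A. \<Sum>d\<in>B. f (c, d))"
  by (simp add: sum.cartesian_product)

lemma exp4: "exp a * exp b * exp c * exp d = exp (a + b + c + (d :: complex))"
  by (simp add: exp_add)

locale sysl =
  fixes dR dS :: nat and uR uS :: "nat \<Rightarrow> nat \<Rightarrow> complex" and lR lS :: "nat \<Rightarrow> real"
    and HR HS :: "complex mat"
  assumes oR: "orthn dR dR uR" and oS: "orthn dS dS uS"
    and HRd: "HR = spm dR uR (\<lambda>a. complex_of_real (lR a))"
    and HSd: "HS = spm dS uS (\<lambda>a. complex_of_real (lS a))"
begin

definition w where "w = wv dS uR uS"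
definition mu where "mu a = lR (a div dS) + lS (a mod dS)"

lemma ow: "orthn (dR * dS) (dR * dS) w"
  unfolding w_def by (rule orthn_wv[OF oR oS])

definition GR :: "real \<Rightarrow> complex mat" where
  "GR t = spm dR uR (\<lambda>a. exp (- (\<i> * complex_of_real t) * complex_of_real (lR a)))"
definition GS :: "real \<Rightarrow> complex mat" where
  "GS t = spm dS uS (\<lambda>a. exp (- (\<i> * complex_of_real t) * complex_of_real (lS a)))"
definition Wt :: "real \<Rightarrow> complex mat" where
  "Wt t = spm (dR * dS) w (\<lambda>a. exp (- (\<i> * complex_of_real t) * complex_of_real (mu a)))"

lemma GR_carrier[simp]: "GR t \<in> carrier_mat dR dR" unfolding GR_def by simp
lemma GS_carrier[simp]: "GS t \<in> carrier_mat dS dS" unfolding GS_def by simp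
lemma Wt_carrier[simp]: "Wt t \<in> carrier_mat (dR * dS) (dR * dS)" unfolding Wt_def by simp

lemma mexp_R1: "mexp ((- (\<i> * complex_of_real t)) \<cdot>\<^sub>m HR) = GR t"
  unfolding HRd spm_smult GR_def by (rule mexp_spm[OF oR])
lemma mexp_R2: "mexp ((\<i> * complex_of_real t) \<cdot>\<^sub>m HR) = GR (- t)"
  unfolding HRd spm_smult GR_def mexp_spm[OF oR] by simp
lemma mexp_S1: "mexp ((- (\<i> * complex_of_real t)) \<cdot>\<^sub>m HS) = GS t"
  unfolding HSd spm_smult GS_def by (rule mexp_spm[OF oS])
lemma mexp_S2: "mexp ((\<i> * complex_of_real t) \<cdot>\<^sub>m HS) = GS (- t)"
  unfolding HSd spm_smult GS_def mexp_spm[OF oS] by simp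

lemma kron_G: "kron (GR t) (GS t) = Wt t"
  unfolding GR_def GS_def Wt_def kron_spm w_def mu_def
  by (simp add: exp_add[symmetric] algebra_simps)

lemma evolR: "evol HR t A = GR t * A * GR (- t)"
  unfolding evol_def mexp_R1 mexp_R2 ..
lemma evolS: "evol HS t A = GS t * A * GS (- t)"
  unfolding evol_def mexp_S1 mexp_S2 ..
lemma evol2W: "evol2 HR HS t X = Wt t * X * Wt (- t)"
  unfolding evol2_def mexp_R1 mexp_R2 mexp_S1 mexp_S2 kron_G ..

lemma GR_mult: "GR s * GR t = GR (s + t)"
  unfolding GR_def spm_mult[OF oR] by (simp add: exp_add[symmetric] algebra_simps)
lemma GS_mult: "GS s * GS t = GS (s + t)"
  unfolding GS_def spm_mult[OF oS] by (simp add: exp_add[symmetric] algebra_simps)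
lemma Wt_mult: "Wt s * Wt t = Wt (s + t)"
  unfolding Wt_def spm_mult[OF ow] by (simp add: exp_add[symmetric] algebra_simps)
lemma GR0: "GR 0 = 1\<^sub>m dR" unfolding GR_def using spm_one[OF oR] by simp
lemma GS0: "GS 0 = 1\<^sub>m dS" unfolding GS_def using spm_one[OF oS] by simp
lemma Wt0: "Wt 0 = 1\<^sub>m (dR * dS)" unfolding Wt_def using spm_one[OF ow] by simp

lemma madj_Wt: "madj (Wt t) = Wt (- t)"
  unfolding Wt_def madj_spm by (simp add: exp_cnj)

lemma evol_R_inv:
  assumes "A \<in> carrier_mat dR dR"
  shows "evol HR (- t) (evol HR t A) = A"
proof -
  have "evol HR (- t) (evol HR t A) = GR (- t) * (GR t * A * GR (- t)) * GR t"
    unfolding evolR by simp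
  also have "\<dots> = (GR (- t) * GR t) * A * (GR (- t) * GR t)"
    using assms by (intro assoc5) auto
  also have "\<dots> = A" using assms by (simp add: GR_mult GR0)
  finally show ?thesis .
qed

lemma evol2_comp:
  assumes "X \<in> carrier_mat (dR * dS) (dR * dS)"
  shows "evol2 HR HS s (evol2 HR HS t X) = evol2 HR HS (s + t) X"
proof -
  have "evol2 HR HS s (evol2 HR HS t X) = Wt s * (Wt t * X * Wt (- t)) * Wt (- s)"
    unfolding evol2W by simp
  also have "\<dots> = (Wt s * Wt t) * X * (Wt (- t) * Wt (- s))"
    using assms by (intro assoc5) auto
  also have "\<dots> = evol2 HR HS (s + t) X" unfolding evol2W Wt_mult by (simp add: add.commute)
  finally show ?thesis .
qed

lemma evol_S_inv:
  assumes "A \<in> carrier_mat dS dS"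
  shows "evol HS (- t) (evol HS t A) = A"
proof -
  have "evol HS (- t) (evol HS t A) = GS (- t) * (GS t * A * GS (- t)) * GS t"
    unfolding evolS by simp
  also have "\<dots> = (GS (- t) * GS t) * A * (GS (- t) * GS t)"
    using assms by (intro assoc5) auto
  also have "\<dots> = A" using assms by (simp add: GS_mult GS0)
  finally show ?thesis .
qed

lemma evol2_kron:
  assumes A: "A \<in> carrier_mat dR dR" and B: "B \<in> carrier_mat dS dS"
  shows "evol2 HR HS t (kron A B) = kron (evol HR t A) (evol HS t B)"
proof -
  have "evol2 HR HS t (kron A B) = kron (GR t) (GS t) * kron A B * kron (GR (- t)) (GS (- t))"
    unfolding evol2W kron_G ..
  also have "\<dots> = kron (GR t * A) (GS t * B) * kron (GR (- t)) (GS (- t))"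
    using A B by (simp add: kron_mult[of _ dR _ _ dS])
  also have "\<dots> = kron (GR t * A * GR (- t)) (GS t * B * GS (- t))"
    using A B by (intro kron_mult[of _ dR _ _ dS] mult_carrier_mat[of _ dR dR _ dR] mult_carrier_mat[of _ dS dS _ dS]) auto
  finally show ?thesis unfolding evolR evolS .
qed

lemma ptrace_S_evol2:
  assumes M: "M \<in> carrier_mat (dR * dS) (dR * dS)"
  shows "ptrace_S dR dS (evol2 HR HS t M) = evol HR t (ptrace_S dR dS M)"
proof -
  have "ptrace_S dR dS (evol2 HR HS t M) = ptrace_S dR dS (kron (GR t) (GS t) * M * kron (GR (- t)) (GS (- t)))"
    unfolding evol2W kron_G ..
  also have "\<dots> = GR t * ptrace_S dR dS M * GR (- t)"
    using M by (intro ptrace_S_kron) (auto simp: GS_mult GS0)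
  finally show ?thesis unfolding evolR .
qed

lemma ptrace_R_evol2:
  assumes M: "M \<in> carrier_mat (dR * dS) (dR * dS)"
  shows "ptrace_R dR dS (evol2 HR HS t M) = evol HS t (ptrace_R dR dS M)"
proof -
  have "ptrace_R dR dS (evol2 HR HS t M) = ptrace_R dR dS (kron (GR t) (GS t) * M * kron (GR (- t)) (GS (- t)))"
    unfolding evol2W kron_G ..
  also have "\<dots> = GS t * ptrace_R dR dS M * GS (- t)"
    using M by (intro ptrace_R_kron) (auto simp: GR_mult GR0)
  finally show ?thesis unfolding evolS .
qed

lemma stationary:
  assumes r: "\<rho> \<in> carrier_mat dS dS" and c: "\<rho> * HS = HS * \<rho>"
  shows "evol HS t \<rho> = \<rho>"
proof -
  have cm: "\<rho> * GS s = GS s * \<rho>" for s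
    unfolding GS_def
    by (rule commute_spm[OF oS r, of lS "\<lambda>x. exp (- (\<i> * complex_of_real s) * complex_of_real x)"]) (use c HSd in simp)
  have "evol HS t \<rho> = GS t * \<rho> * GS (- t)" unfolding evolS ..
  also have "\<dots> = \<rho> * GS t * GS (- t)" unfolding cm ..
  also have "\<dots> = \<rho> * (GS t * GS (- t))" using r by (simp add: assoc_mult_mat[of _ dS dS _ dS _ dS])
  also have "\<dots> = \<rho>" using r by (simp add: GS_mult GS0)
  finally show ?thesis .
qed

definition PP :: "nat \<Rightarrow> nat \<Rightarrow> complex mat" where
  "PP c d = mat (dR * dS) (dR * dS) (\<lambda>(i, j). w c i * cnj (w d j))"
definition Om where "Om a b c d = mu a - mu b - mu c + mu d"
definition Kf where
  "Kf E X i j a b c d = w a i * cnj (w b j) * cf (dR * dS) w X c d * cf (dR * dS) w (E (PP c d)) a b"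

lemma PP_carrier[simp]: "PP c d \<in> carrier_mat (dR * dS) (dR * dS)" unfolding PP_def by simp

definition al :: "real \<Rightarrow> nat \<Rightarrow> complex" where
  "al t a = exp (- (\<i> * complex_of_real t) * complex_of_real (mu a))"

lemma f_formula:
  fixes E :: "complex mat \<Rightarrow> complex mat"
  assumes Ec: "\<forall>X\<in>carrier_mat (dR * dS) (dR * dS). E X \<in> carrier_mat (dR * dS) (dR * dS)"
    and Ea: "\<forall>X\<in>carrier_mat (dR * dS) (dR * dS). \<forall>Y\<in>carrier_mat (dR * dS) (dR * dS). E (X + Y) = E X + E Y"
    and Es: "\<forall>X\<in>carrier_mat (dR * dS) (dR * dS). \<forall>c. E (c \<cdot>\<^sub>m X) = c \<cdot>\<^sub>m E X"
    and X: "X \<in> carrier_mat (dR * dS) (dR * dS)" and ij: "i < dR * dS" "j < dR * dS"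
  shows "(evol2 HR HS (- t) (E (evol2 HR HS t X))) $$ (i, j) =
    (\<Sum>a<dR * dS. \<Sum>b<dR * dS. \<Sum>c<dR * dS. \<Sum>d<dR * dS. Kf E X i j a b c d * exp (\<i> * complex_of_real (t * Om a b c d)))"
proof -
  let ?N = "dR * dS"
  let ?S = "{..<?N} \<times> {..<?N}"
  define \<gamma> where "\<gamma> s = (case s of (c, d) \<Rightarrow> al t c * al (- t) d * cf ?N w X c d)" for s
  define Z where "Z = evol2 HR HS t X"
  have Zc: "Z \<in> carrier_mat ?N ?N" unfolding Z_def evol2W using X
    by (intro mult_carrier_mat[of _ ?N ?N _ ?N]) auto
  have Wt_al: "Wt s = spm ?N w (al s)" for s unfolding Wt_def al_def ..
  have Zk: "Z $$ (k, l) = (\<Sum>s\<in>?S. \<gamma> s * (case s of (c, d) \<Rightarrow> PP c d) $$ (k, l))" if "k < ?N" "l < ?N" for k l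
  proof -
    have "Z $$ (k, l) = (\<Sum>c<?N. \<Sum>d<?N. al t c * al (- t) d * w c k * cnj (w d l) * cf ?N w X c d)"
      unfolding Z_def evol2W Wt_al using X that by (intro spm_trip) auto
    also have "\<dots> = (\<Sum>s\<in>?S. \<gamma> s * (case s of (c, d) \<Rightarrow> PP c d) $$ (k, l))"
      unfolding sum_prod_split \<gamma>_def PP_def using that by (intro sum.cong refl) (simp add: mult_ac)
    finally show ?thesis .
  qed
  have Zeq: "Z = mat ?N ?N (\<lambda>(k, l). \<Sum>s\<in>?S. \<gamma> s * (case s of (c, d) \<Rightarrow> PP c d) $$ (k, l))"
    using Zc Zk by (intro eq_matI) auto
  have EZ: "E Z $$ (k, l) = (\<Sum>s\<in>?S. \<gamma> s * E (case s of (c, d) \<Rightarrow> PP c d) $$ (k, l))" if "k < ?N" "l < ?N" for k l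
    unfolding Zeq by (rule lin_expand[OF Ec Ea Es]) (use that in \<open>auto split: prod.splits\<close>)
  have EZc: "E Z \<in> carrier_mat ?N ?N" using Ec Zc by auto
  have cfEZ: "cf ?N w (E Z) a b = (\<Sum>s\<in>?S. \<gamma> s * cf ?N w (E (case s of (c, d) \<Rightarrow> PP c d)) a b)" for a b
    by (rule cf_lin) (rule EZ)
  have "(evol2 HR HS (- t) (E Z)) $$ (i, j) = (\<Sum>a<?N. \<Sum>b<?N. al (- t) a * al t b * w a i * cnj (w b j) * cf ?N w (E Z) a b)"
    unfolding evol2W Wt_al minus_minus by (rule spm_trip[OF EZc ij])
  also have "\<dots> = (\<Sum>a<?N. \<Sum>b<?N. \<Sum>c<?N. \<Sum>d<?N. Kf E X i j a b c d * exp (\<i> * complex_of_real (t * Om a b c d)))"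
  proof (intro sum.cong refl)
    fix a b
    have "al (- t) a * al t b * w a i * cnj (w b j) * cf ?N w (E Z) a b =
      (\<Sum>c<?N. \<Sum>d<?N. al (- t) a * al t b * w a i * cnj (w b j) * (al t c * al (- t) d * cf ?N w X c d * cf ?N w (E (PP c d)) a b))"
      unfolding cfEZ sum_prod_split \<gamma>_def by (simp add: sum_distrib_left)
    also have "\<dots> = (\<Sum>c<?N. \<Sum>d<?N. Kf E X i j a b c d * exp (\<i> * complex_of_real (t * Om a b c d)))"
    proof (intro sum.cong refl)
      fix c d
      have "al (- t) a * al t b * al t c * al (- t) d = exp (\<i> * complex_of_real (t * Om a b c d))"
        unfolding al_def exp4 Om_def by (simp add: algebra_simps)
      then show "al (- t) a * al t b * w a i * cnj (w b j) * (al t c * al (- t) d * cf ?N w X c d * cf ?N w (E (PP c d)) a b) =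
        Kf E X i j a b c d * exp (\<i> * complex_of_real (t * Om a b c d))"
        unfolding Kf_def by (simp add: mult_ac)
    qed
    finally show "al (- t) a * al t b * w a i * cnj (w b j) * cf ?N w (E Z) a b =
      (\<Sum>c<?N. \<Sum>d<?N. Kf E X i j a b c d * exp (\<i> * complex_of_real (t * Om a b c d)))" .
  qed
  finally show ?thesis unfolding Z_def .
qed

definition Ep :: "(complex mat \<Rightarrow> complex mat) \<Rightarrow> complex mat \<Rightarrow> complex mat" where
  "Ep E X = mat (dR * dS) (dR * dS) (\<lambda>(i, j). \<Sum>a<dR * dS. \<Sum>b<dR * dS. \<Sum>c<dR * dS. \<Sum>d<dR * dS.
     (if Om a b c d = 0 then Kf E X i j a b c d else 0))"

lemma Ep_carrier[simp]: "Ep E X \<in> carrier_mat (dR * dS) (dR * dS)" unfolding Ep_def by simp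

lemma avg_f:
  fixes E :: "complex mat \<Rightarrow> complex mat"
  assumes Ec: "\<forall>X\<in>carrier_mat (dR * dS) (dR * dS). E X \<in> carrier_mat (dR * dS) (dR * dS)"
    and Ea: "\<forall>X\<in>carrier_mat (dR * dS) (dR * dS). \<forall>Y\<in>carrier_mat (dR * dS) (dR * dS). E (X + Y) = E X + E Y"
    and Es: "\<forall>X\<in>carrier_mat (dR * dS) (dR * dS). \<forall>c. E (c \<cdot>\<^sub>m X) = c \<cdot>\<^sub>m E X"
    and X: "X \<in> carrier_mat (dR * dS) (dR * dS)" and ij: "i < dR * dS" "j < dR * dS"
  shows "has_avg (\<lambda>t. (evol2 HR HS (- (t + s)) (E (evol2 HR HS (t + s) X))) $$ (i, j)) (Ep E X $$ (i, j))"
proof (rule has_avg_cong)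
  show "has_avg (\<lambda>t. \<Sum>a<dR * dS. \<Sum>b<dR * dS. \<Sum>c<dR * dS. \<Sum>d<dR * dS.
      Kf E X i j a b c d * exp (\<i> * complex_of_real ((t + s) * Om a b c d)))
    (\<Sum>a<dR * dS. \<Sum>b<dR * dS. \<Sum>c<dR * dS. \<Sum>d<dR * dS. (if Om a b c d = 0 then Kf E X i j a b c d else 0))"
    by (intro has_avg_sum finite_lessThan has_avg_exp)
  show "(\<Sum>a<dR * dS. \<Sum>b<dR * dS. \<Sum>c<dR * dS. \<Sum>d<dR * dS.
      Kf E X i j a b c d * exp (\<i> * complex_of_real ((t + s) * Om a b c d))) =
    (evol2 HR HS (- (t + s)) (E (evol2 HR HS (t + s) X))) $$ (i, j)" for t
    using f_formula[OF Ec Ea Es X ij, of "t + s"] by simp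
  show "(\<Sum>a<dR * dS. \<Sum>b<dR * dS. \<Sum>c<dR * dS. \<Sum>d<dR * dS. (if Om a b c d = 0 then Kf E X i j a b c d else 0)) = Ep E X $$ (i, j)"
    unfolding Ep_def using ij by simp
qed

lemma evol2_carrier[simp]: "X \<in> carrier_mat (dR * dS) (dR * dS) \<Longrightarrow> evol2 HR HS t X \<in> carrier_mat (dR * dS) (dR * dS)"
  unfolding evol2W by (intro mult_carrier_mat[of _ "dR * dS" "dR * dS" _ "dR * dS"]) auto

lemma evol2_add:
  assumes "X \<in> carrier_mat (dR * dS) (dR * dS)" "Y \<in> carrier_mat (dR * dS) (dR * dS)"
  shows "evol2 HR HS t (X + Y) = evol2 HR HS t X + evol2 HR HS t Y"
  unfolding evol2W using assms
  by (simp add: mult_add_distrib_mat[OF Wt_carrier assms] add_mult_distrib_mat[OF mult_carrier_mat[OF Wt_carrier assms(1)] mult_carrier_mat[OF Wt_carrier assms(2)] Wt_carrier])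

lemma evol2_smult:
  assumes "X \<in> carrier_mat (dR * dS) (dR * dS)"
  shows "evol2 HR HS t (c \<cdot>\<^sub>m X) = c \<cdot>\<^sub>m evol2 HR HS t X"
  unfolding evol2W using assms
  by (simp add: mult_smult_distrib[OF Wt_carrier assms] mult_smult_assoc_mat[OF mult_carrier_mat[OF Wt_carrier assms] Wt_carrier])

end

definition bdiag :: "nat \<Rightarrow> nat \<Rightarrow> complex mat \<Rightarrow> complex mat" where
  "bdiag k N A = mat (k * N) (k * N) (\<lambda>(i, j). if i div N = j div N then A $$ (i mod N, j mod N) else 0)"

definition blk :: "nat \<Rightarrow> complex mat \<Rightarrow> nat \<Rightarrow> nat \<Rightarrow> complex mat" where
  "blk N M I J = mat N N (\<lambda>(p, q). M $$ (I * N + p, J * N + q))"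

lemma bdiag_carrier[simp]: "bdiag k N A \<in> carrier_mat (k * N) (k * N)" unfolding bdiag_def by simp
lemma blk_carrier[simp]: "blk N M I J \<in> carrier_mat N N" unfolding blk_def by simp

lemma sum_collapse:
  assumes "(I::nat) < k" "\<And>r s. r \<noteq> I \<Longrightarrow> f r s = 0"
  shows "(\<Sum>r<k. \<Sum>s\<in>S. f r s) = (\<Sum>s\<in>S. f I s)"
proof -
  have "(\<Sum>r<k. \<Sum>s\<in>S. f r s) = (\<Sum>r<k. if r = I then (\<Sum>s\<in>S. f I s) else 0)"
    using assms(2) by (intro sum.cong refl) auto
  also have "\<dots> = (\<Sum>s\<in>S. f I s)" using assms(1) by (subst sum.delta) auto
  finally show ?thesis .
qed

lemma bdiag_trip:
  assumes A: "A \<in> carrier_mat N N" and B: "B \<in> carrier_mat N N" and M: "M \<in> carrier_mat (k * N) (k * N)"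
    and ij: "i < k * N" "j < k * N"
  shows "(bdiag k N A * M * bdiag k N B) $$ (i, j) = (A * blk N M (i div N) (j div N) * B) $$ (i mod N, j mod N)"
proof -
  have iN: "i div N < k" "i mod N < N" "j div N < k" "j mod N < N" using ij by (auto simp: lt_mult_div lt_mult_mod)
  have "(bdiag k N A * M * bdiag k N B) $$ (i, j) =
    (\<Sum>p<k * N. \<Sum>q<k * N. bdiag k N A $$ (i, p) * M $$ (p, q) * bdiag k N B $$ (q, j))"
    using M ij by (intro trip_entry) auto
  also have "\<dots> = (\<Sum>r1<k. \<Sum>x<N. \<Sum>r2<k. \<Sum>y<N. (if i div N = r1 then (if r2 = j div N then
      A $$ (i mod N, x) * M $$ (r1 * N + x, r2 * N + y) * B $$ (y, j mod N) else 0) else 0))"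
    unfolding sum_mult_split
    by (intro sum.cong refl) (use ij in \<open>auto simp: bdiag_def idx_lt\<close>)
  also have "\<dots> = (\<Sum>x<N. \<Sum>r2<k. \<Sum>y<N. (if r2 = j div N then
      A $$ (i mod N, x) * M $$ (i div N * N + x, r2 * N + y) * B $$ (y, j mod N) else 0))"
    by (subst sum_collapse[OF iN(1)]) auto
  also have "\<dots> = (\<Sum>x<N. \<Sum>y<N. A $$ (i mod N, x) * M $$ (i div N * N + x, j div N * N + y) * B $$ (y, j mod N))"
  proof (rule sum.cong[OF refl])
    fix x
    have "(\<Sum>r2<k. \<Sum>y<N. (if r2 = j div N then
      A $$ (i mod N, x) * M $$ (i div N * N + x, r2 * N + y) * B $$ (y, j mod N) else 0)) =
      (\<Sum>r2<k. \<Sum>y<N. (if j div N = r2 then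
      A $$ (i mod N, x) * M $$ (i div N * N + x, r2 * N + y) * B $$ (y, j mod N) else 0))"
      by (intro sum.cong refl) auto
    also have "\<dots> = (\<Sum>y<N. A $$ (i mod N, x) * M $$ (i div N * N + x, j div N * N + y) * B $$ (y, j mod N))"
      by (subst sum_collapse[OF iN(3)]) auto
    finally show "(\<Sum>r2<k. \<Sum>y<N. (if r2 = j div N then
      A $$ (i mod N, x) * M $$ (i div N * N + x, r2 * N + y) * B $$ (y, j mod N) else 0)) =
      (\<Sum>y<N. A $$ (i mod N, x) * M $$ (i div N * N + x, j div N * N + y) * B $$ (y, j mod N))" .
  qed
  also have "\<dots> = (A * blk N M (i div N) (j div N) * B) $$ (i mod N, j mod N)"
    using A B iN by (subst trip_entry[of _ N]) (auto simp: blk_def)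
  finally show ?thesis .
qed

lemma id_tensor_entry:
  assumes "i < k * N" "j < k * N"
  shows "id_tensor k N E M $$ (i, j) = E (blk N M (i div N) (j div N)) $$ (i mod N, j mod N)"
  using assms unfolding id_tensor_def blk_def by simp

lemma blk_index: "I < k \<Longrightarrow> p < N \<Longrightarrow> I * N + p < k * (N::nat)"
  using idx_lt by auto

lemma blk_id_tensor:
  assumes "I < k" "J < k" "E (blk N M I J) \<in> carrier_mat N N"
  shows "blk N (id_tensor k N E M) I J = E (blk N M I J)"
  using assms by (intro eq_matI) (auto simp: blk_def id_tensor_entry blk_index)

lemma blk_bdiag_trip:
  assumes A: "A \<in> carrier_mat N N" and B: "B \<in> carrier_mat N N" and M: "M \<in> carrier_mat (k * N) (k * N)"
    and IJ: "I < k" "J < k"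
  shows "blk N (bdiag k N A * M * bdiag k N B) I J = A * blk N M I J * B"
proof (rule eq_matI)
  fix p q assume "p < dim_row (A * blk N M I J * B)" "q < dim_col (A * blk N M I J * B)"
  then have pq: "p < N" "q < N" using A B by auto
  have "blk N (bdiag k N A * M * bdiag k N B) I J $$ (p, q) = (bdiag k N A * M * bdiag k N B) $$ (I * N + p, J * N + q)"
    unfolding blk_def using pq by simp
  also have "\<dots> = (A * blk N M I J * B) $$ (p, q)"
    using bdiag_trip[OF A B M blk_index[OF IJ(1) pq(1)] blk_index[OF IJ(2) pq(2)]] pq by simp
  finally show "blk N (bdiag k N A * M * bdiag k N B) I J $$ (p, q) = (A * blk N M I J * B) $$ (p, q)" .
qed (use A B in \<open>auto simp: blk_def\<close>)

lemma madj_entry: "A \<in> carrier_mat n m \<Longrightarrow> i < m \<Longrightarrow> j < n \<Longrightarrow> madj A $$ (i, j) = cnj (A $$ (j, i))"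
  unfolding madj_def by auto

lemma madj_carrier[simp]: "A \<in> carrier_mat n m \<Longrightarrow> madj A \<in> carrier_mat m n"
  unfolding madj_def by auto

lemma madj_bdiag:
  assumes "A \<in> carrier_mat N N"
  shows "madj (bdiag k N A) = bdiag k N (madj A)"
  using assms by (intro eq_matI) (auto simp: madj_def bdiag_def lt_mult_mod)

lemma psd_congr:
  assumes P: "psd n M" and A: "A \<in> carrier_mat n n"
  shows "psd n (A * M * madj A)"
proof -
  have M: "M \<in> carrier_mat n n" using P unfolding psd_def by auto
  have Q: "Im (\<Sum>i<n. \<Sum>j<n. cnj (v i) * M $$ (i, j) * v j) = 0 \<and> Re (\<Sum>i<n. \<Sum>j<n. cnj (v i) * M $$ (i, j) * v j) \<ge> 0" for v
    using P unfolding psd_def Let_def by auto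
  show ?thesis unfolding psd_def Let_def
  proof (intro conjI allI)
    show "A * M * madj A \<in> carrier_mat n n" using A M by (intro mult_carrier_mat[of _ n n]) auto
    fix v :: "nat \<Rightarrow> complex"
    define u where "u q = (\<Sum>j<n. cnj (A $$ (j, q)) * v j)" for q
    have "(\<Sum>i<n. \<Sum>j<n. cnj (v i) * (A * M * madj A) $$ (i, j) * v j) =
      (\<Sum>i<n. \<Sum>j<n. \<Sum>p<n. \<Sum>q<n. cnj (v i) * (A $$ (i, p) * M $$ (p, q) * cnj (A $$ (j, q))) * v j)"
    proof (intro sum.cong refl)
      fix i j assume "i \<in> {..<n}" "j \<in> {..<n}"
      then have ij: "i < n" "j < n" by auto
      have "(A * M * madj A) $$ (i, j) = (\<Sum>p<n. \<Sum>q<n. A $$ (i, p) * M $$ (p, q) * madj A $$ (q, j))"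
        using A M ij by (intro trip_entry) auto
      also have "\<dots> = (\<Sum>p<n. \<Sum>q<n. A $$ (i, p) * M $$ (p, q) * cnj (A $$ (j, q)))"
        using A ij by (intro sum.cong refl) (simp add: madj_entry)
      finally show "cnj (v i) * (A * M * madj A) $$ (i, j) * v j =
        (\<Sum>p<n. \<Sum>q<n. cnj (v i) * (A $$ (i, p) * M $$ (p, q) * cnj (A $$ (j, q))) * v j)"
        by (simp add: sum_distrib_left sum_distrib_right)
    qed
    also have "\<dots> = (\<Sum>p<n. \<Sum>q<n. \<Sum>i<n. \<Sum>j<n. cnj (v i) * (A $$ (i, p) * M $$ (p, q) * cnj (A $$ (j, q))) * v j)"
      by (rule sum_swap4)
    also have "\<dots> = (\<Sum>p<n. \<Sum>q<n. cnj (u p) * M $$ (p, q) * u q)"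
    proof (intro sum.cong refl)
      fix p q
      have "cnj (u p) * M $$ (p, q) * u q = (\<Sum>i<n. A $$ (i, p) * cnj (v i)) * M $$ (p, q) * (\<Sum>j<n. cnj (A $$ (j, q)) * v j)"
        unfolding u_def cnj_sum by simp
      also have "\<dots> = (\<Sum>i<n. \<Sum>j<n. (A $$ (i, p) * cnj (v i)) * M $$ (p, q) * (cnj (A $$ (j, q)) * v j))"
        by (rule sum_mult_sum)
      finally show "(\<Sum>i<n. \<Sum>j<n. cnj (v i) * (A $$ (i, p) * M $$ (p, q) * cnj (A $$ (j, q))) * v j) = cnj (u p) * M $$ (p, q) * u q"
        by (simp add: mult_ac)
    qed
    finally show "Im (\<Sum>i<n. \<Sum>j<n. cnj (v i) * (A * M * madj A) $$ (i, j) * v j) = 0"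
      "Re (\<Sum>i<n. \<Sum>j<n. cnj (v i) * (A * M * madj A) $$ (i, j) * v j) \<ge> 0"
      using Q[of u] by auto
  qed
qed

lemma mtrace_cyc:
  assumes "A \<in> carrier_mat n m" "B \<in> carrier_mat m n"
  shows "mtrace (A * B) = mtrace (B * A)"
proof -
  have "mtrace (A * B) = (\<Sum>i<n. \<Sum>k<m. A $$ (i, k) * B $$ (k, i))"
    unfolding mtrace_def using assms by (intro sum.cong) (auto simp del: index_mult_mat(1) simp: mult_entry[OF assms(1,2)] carrier_matD)
  also have "\<dots> = (\<Sum>k<m. \<Sum>i<n. B $$ (k, i) * A $$ (i, k))"
    by (subst sum.swap) (simp add: mult.commute)
  also have "\<dots> = mtrace (B * A)"
    unfolding mtrace_def using assms by (intro sum.cong) (auto simp del: index_mult_mat(1) simp: mult_entry[OF assms(2,1)])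
  finally show ?thesis .
qed

context sysl
begin

lemma Ep_dim[simp]: "dim_row (Ep E X) = dR * dS" "dim_col (Ep E X) = dR * dS"
  unfolding Ep_def by simp_all

lemma chanD:
  assumes "channel (dR * dS) E"
  shows "\<forall>X\<in>carrier_mat (dR * dS) (dR * dS). E X \<in> carrier_mat (dR * dS) (dR * dS)"
    "\<forall>X\<in>carrier_mat (dR * dS) (dR * dS). \<forall>Y\<in>carrier_mat (dR * dS) (dR * dS). E (X + Y) = E X + E Y"
    "\<forall>X\<in>carrier_mat (dR * dS) (dR * dS). \<forall>c. E (c \<cdot>\<^sub>m X) = c \<cdot>\<^sub>m E X"
    "\<forall>X\<in>carrier_mat (dR * dS) (dR * dS). mtrace (E X) = mtrace X"
    "\<forall>k X. psd (k * (dR * dS)) X \<longrightarrow> psd (k * (dR * dS)) (id_tensor k (dR * dS) E X)"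
  using assms unfolding channel_def by auto

lemma avg_f0:
  assumes E: "channel (dR * dS) E"
    and X: "X \<in> carrier_mat (dR * dS) (dR * dS)" and ij: "i < dR * dS" "j < dR * dS"
  shows "has_avg (\<lambda>t. (evol2 HR HS (- t) (E (evol2 HR HS t X))) $$ (i, j)) (Ep E X $$ (i, j))"
  using avg_f[OF chanD(1-3)[OF E] X ij, of 0] by simp

lemma Phi_cp:
  assumes E: "channel (dR * dS) E" and P: "psd (k * (dR * dS)) Xb"
  shows "psd (k * (dR * dS)) (id_tensor k (dR * dS) (\<lambda>Y. evol2 HR HS (- t) (E (evol2 HR HS t Y))) Xb)"
proof -
  let ?N = "dR * dS"
  define D where "D s = bdiag k ?N (Wt s)" for s
  have Dc: "D s \<in> carrier_mat (k * ?N) (k * ?N)" for s unfolding D_def by simp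
  have Dadj: "madj (D s) = D (- s)" for s unfolding D_def madj_bdiag[OF Wt_carrier] madj_Wt ..
  have Xb: "Xb \<in> carrier_mat (k * ?N) (k * ?N)" using P unfolding psd_def by auto
  define X' where "X' = D t * Xb * D (- t)"
  have X'c: "X' \<in> carrier_mat (k * ?N) (k * ?N)" unfolding X'_def using Dc Xb
    by (intro mult_carrier_mat[of _ "k * ?N" "k * ?N"]) auto
  have pX': "psd (k * ?N) X'" unfolding X'_def using psd_congr[OF P Dc[of t]] Dadj by simp
  define Y where "Y = id_tensor k ?N E X'"
  have pY: "psd (k * ?N) Y" unfolding Y_def using chanD(5)[OF E] pX' by auto
  have Yc: "Y \<in> carrier_mat (k * ?N) (k * ?N)" using pY unfolding psd_def by auto
  define Z where "Z = D (- t) * Y * D t"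
  have pZ: "psd (k * ?N) Z" unfolding Z_def using psd_congr[OF pY Dc[of "- t"]] Dadj by simp
  have "id_tensor k ?N (\<lambda>Y. evol2 HR HS (- t) (E (evol2 HR HS t Y))) Xb = Z"
  proof (rule eq_matI)
    have Zc: "Z \<in> carrier_mat (k * ?N) (k * ?N)" using pZ unfolding psd_def by auto
    fix i j assume "i < dim_row Z" "j < dim_col Z"
    then have ij: "i < k * ?N" "j < k * ?N" using Zc by auto
    have IJ: "i div ?N < k" "j div ?N < k" using ij by (auto simp: lt_mult_div)
    have b1: "Wt t * blk ?N Xb (i div ?N) (j div ?N) * Wt (- t) = blk ?N X' (i div ?N) (j div ?N)"
      unfolding X'_def D_def by (rule blk_bdiag_trip[symmetric, OF Wt_carrier Wt_carrier Xb IJ])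
    have b2: "E (blk ?N X' (i div ?N) (j div ?N)) = blk ?N Y (i div ?N) (j div ?N)"
      unfolding Y_def using chanD(1)[OF E] by (intro blk_id_tensor[symmetric] IJ) auto
    have "id_tensor k ?N (\<lambda>Y. evol2 HR HS (- t) (E (evol2 HR HS t Y))) Xb $$ (i, j) =
      (Wt (- t) * E (Wt t * blk ?N Xb (i div ?N) (j div ?N) * Wt (- t)) * Wt t) $$ (i mod ?N, j mod ?N)"
      using ij by (simp add: id_tensor_entry evol2W)
    also have "\<dots> = (Wt (- t) * blk ?N Y (i div ?N) (j div ?N) * Wt t) $$ (i mod ?N, j mod ?N)"
      unfolding b1 b2 ..
    also have "\<dots> = Z $$ (i, j)"
      unfolding Z_def D_def by (rule bdiag_trip[symmetric, OF Wt_carrier Wt_carrier Yc ij])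
    finally show "id_tensor k ?N (\<lambda>Y. evol2 HR HS (- t) (E (evol2 HR HS t Y))) Xb $$ (i, j) = Z $$ (i, j)" .
  qed (use pZ in \<open>auto simp: psd_def id_tensor_def\<close>)
  with pZ show ?thesis by simp
qed

lemma Ep_cp:
  assumes E: "channel (dR * dS) E" and P: "psd (k * (dR * dS)) Xb"
  shows "psd (k * (dR * dS)) (id_tensor k (dR * dS) (Ep E) Xb)"
  unfolding psd_def Let_def
proof (intro conjI allI)
  let ?N = "dR * dS"
  show "id_tensor k ?N (Ep E) Xb \<in> carrier_mat (k * ?N) (k * ?N)" unfolding id_tensor_def by simp
  fix v :: "nat \<Rightarrow> complex"
  let ?F = "\<lambda>t i j. (evol2 HR HS (- t) (E (evol2 HR HS t (blk ?N Xb (i div ?N) (j div ?N))))) $$ (i mod ?N, j mod ?N)"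
  have avg: "has_avg (\<lambda>t. \<Sum>i<k * ?N. \<Sum>j<k * ?N. (cnj (v i) * v j) * ?F t i j)
    (\<Sum>i<k * ?N. \<Sum>j<k * ?N. (cnj (v i) * v j) * Ep E (blk ?N Xb (i div ?N) (j div ?N)) $$ (i mod ?N, j mod ?N))"
    by (intro has_avg_sum finite_lessThan has_avg_cmult avg_f0[OF E] blk_carrier)
      (auto simp: lt_mult_mod)
  have pt: "Im (\<Sum>i<k * ?N. \<Sum>j<k * ?N. (cnj (v i) * v j) * ?F t i j) = 0 \<and>
      Re (\<Sum>i<k * ?N. \<Sum>j<k * ?N. (cnj (v i) * v j) * ?F t i j) \<ge> 0" for t
  proof -
    have p: "psd (k * ?N) (id_tensor k ?N (\<lambda>Y. evol2 HR HS (- t) (E (evol2 HR HS t Y))) Xb)"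
      by (rule Phi_cp[OF E P])
    have "(\<Sum>i<k * ?N. \<Sum>j<k * ?N. (cnj (v i) * v j) * ?F t i j) =
      (\<Sum>i<k * ?N. \<Sum>j<k * ?N. cnj (v i) * id_tensor k ?N (\<lambda>Y. evol2 HR HS (- t) (E (evol2 HR HS t Y))) Xb $$ (i, j) * v j)"
      by (intro sum.cong refl) (simp add: id_tensor_entry mult_ac)
    then show ?thesis using p unfolding psd_def Let_def by metis
  qed
  have lim: "Im (\<Sum>i<k * ?N. \<Sum>j<k * ?N. (cnj (v i) * v j) * Ep E (blk ?N Xb (i div ?N) (j div ?N)) $$ (i mod ?N, j mod ?N)) = 0 \<and>
    Re (\<Sum>i<k * ?N. \<Sum>j<k * ?N. (cnj (v i) * v j) * Ep E (blk ?N Xb (i div ?N) (j div ?N)) $$ (i mod ?N, j mod ?N)) \<ge> 0"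
    by (rule has_avg_cone[OF avg]) (use pt in auto)
  have eq: "(\<Sum>i<k * ?N. \<Sum>j<k * ?N. cnj (v i) * id_tensor k ?N (Ep E) Xb $$ (i, j) * v j) =
    (\<Sum>i<k * ?N. \<Sum>j<k * ?N. (cnj (v i) * v j) * Ep E (blk ?N Xb (i div ?N) (j div ?N)) $$ (i mod ?N, j mod ?N))"
    by (intro sum.cong refl) (simp add: id_tensor_entry mult_ac)
  show "Im (\<Sum>i<k * ?N. \<Sum>j<k * ?N. cnj (v i) * id_tensor k ?N (Ep E) Xb $$ (i, j) * v j) = 0"
    "0 \<le> Re (\<Sum>i<k * ?N. \<Sum>j<k * ?N. cnj (v i) * id_tensor k ?N (Ep E) Xb $$ (i, j) * v j)"
    unfolding eq using lim by auto
qed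

lemma mtrace_evol2:
  assumes M: "M \<in> carrier_mat (dR * dS) (dR * dS)"
  shows "mtrace (evol2 HR HS t M) = mtrace M"
proof -
  have "mtrace (evol2 HR HS t M) = mtrace ((Wt t * M) * Wt (- t))" unfolding evol2W ..
  also have "\<dots> = mtrace (Wt (- t) * (Wt t * M))"
    using M by (intro mtrace_cyc[of _ "dR * dS" "dR * dS"] mult_carrier_mat[of _ "dR * dS" "dR * dS"]) auto
  also have "\<dots> = mtrace ((Wt (- t) * Wt t) * M)" by (simp only: assoc_mult_mat[OF Wt_carrier Wt_carrier M])
  also have "\<dots> = mtrace M" using M by (simp add: Wt_mult Wt0)
  finally show ?thesis .
qed

lemma E_evol2_carrier:
  assumes E: "channel (dR * dS) E" and X: "X \<in> carrier_mat (dR * dS) (dR * dS)"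
  shows "E (evol2 HR HS t X) \<in> carrier_mat (dR * dS) (dR * dS)"
  using chanD(1)[OF E] X by simp

lemma Ep_add:
  assumes E: "channel (dR * dS) E" and X: "X \<in> carrier_mat (dR * dS) (dR * dS)" and Y: "Y \<in> carrier_mat (dR * dS) (dR * dS)"
  shows "Ep E (X + Y) = Ep E X + Ep E Y"
proof (rule eq_matI)
  fix i j assume "i < dim_row (Ep E X + Ep E Y)" "j < dim_col (Ep E X + Ep E Y)"
  then have ij: "i < dR * dS" "j < dR * dS" by auto
  have XY: "X + Y \<in> carrier_mat (dR * dS) (dR * dS)" using X Y by simp
  have a1: "has_avg (\<lambda>t. (evol2 HR HS (- t) (E (evol2 HR HS t (X + Y)))) $$ (i, j)) (Ep E (X + Y) $$ (i, j))"
    by (rule avg_f0[OF E XY ij])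
  have a2: "has_avg (\<lambda>t. (evol2 HR HS (- t) (E (evol2 HR HS t X))) $$ (i, j) + (evol2 HR HS (- t) (E (evol2 HR HS t Y))) $$ (i, j))
     (Ep E X $$ (i, j) + Ep E Y $$ (i, j))"
    by (intro has_avg_add avg_f0[OF E] X Y ij)
  have "(evol2 HR HS (- t) (E (evol2 HR HS t (X + Y)))) $$ (i, j) =
    (evol2 HR HS (- t) (E (evol2 HR HS t X))) $$ (i, j) + (evol2 HR HS (- t) (E (evol2 HR HS t Y))) $$ (i, j)" for t
  proof -
    have "E (evol2 HR HS t (X + Y)) = E (evol2 HR HS t X) + E (evol2 HR HS t Y)"
      unfolding evol2_add[OF X Y] using chanD(2)[OF E] X Y by simp
    then have "evol2 HR HS (- t) (E (evol2 HR HS t (X + Y))) = evol2 HR HS (- t) (E (evol2 HR HS t X)) + evol2 HR HS (- t) (E (evol2 HR HS t Y))"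
      using evol2_add[OF E_evol2_carrier[OF E X] E_evol2_carrier[OF E Y]] by simp
    moreover have "evol2 HR HS (- t) (E (evol2 HR HS t X)) \<in> carrier_mat (dR * dS) (dR * dS)"
      using E_evol2_carrier[OF E X] by simp
    moreover have "evol2 HR HS (- t) (E (evol2 HR HS t Y)) \<in> carrier_mat (dR * dS) (dR * dS)"
      using E_evol2_carrier[OF E Y] by simp
    ultimately show ?thesis using ij by simp
  qed
  then have "has_avg (\<lambda>t. (evol2 HR HS (- t) (E (evol2 HR HS t (X + Y)))) $$ (i, j)) (Ep E X $$ (i, j) + Ep E Y $$ (i, j))"
    using a2 by (intro has_avg_cong[OF a2]) auto
  with a1 have "Ep E (X + Y) $$ (i, j) = Ep E X $$ (i, j) + Ep E Y $$ (i, j)" by (rule has_avg_unique)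
  then show "Ep E (X + Y) $$ (i, j) = (Ep E X + Ep E Y) $$ (i, j)" using ij by simp
qed auto

lemma Ep_smult:
  assumes E: "channel (dR * dS) E" and X: "X \<in> carrier_mat (dR * dS) (dR * dS)"
  shows "Ep E (c \<cdot>\<^sub>m X) = c \<cdot>\<^sub>m Ep E X"
proof (rule eq_matI)
  fix i j assume "i < dim_row (c \<cdot>\<^sub>m Ep E X)" "j < dim_col (c \<cdot>\<^sub>m Ep E X)"
  then have ij: "i < dR * dS" "j < dR * dS" by auto
  have cX: "c \<cdot>\<^sub>m X \<in> carrier_mat (dR * dS) (dR * dS)" using X by simp
  have a1: "has_avg (\<lambda>t. (evol2 HR HS (- t) (E (evol2 HR HS t (c \<cdot>\<^sub>m X)))) $$ (i, j)) (Ep E (c \<cdot>\<^sub>m X) $$ (i, j))"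
    by (rule avg_f0[OF E cX ij])
  have a2: "has_avg (\<lambda>t. c * (evol2 HR HS (- t) (E (evol2 HR HS t X))) $$ (i, j)) (c * Ep E X $$ (i, j))"
    by (intro has_avg_cmult avg_f0[OF E] X ij)
  have "(evol2 HR HS (- t) (E (evol2 HR HS t (c \<cdot>\<^sub>m X)))) $$ (i, j) = c * (evol2 HR HS (- t) (E (evol2 HR HS t X))) $$ (i, j)" for t
  proof -
    have "E (evol2 HR HS t (c \<cdot>\<^sub>m X)) = c \<cdot>\<^sub>m E (evol2 HR HS t X)"
      unfolding evol2_smult[OF X] using chanD(3)[OF E] X by simp
    then have "evol2 HR HS (- t) (E (evol2 HR HS t (c \<cdot>\<^sub>m X))) = c \<cdot>\<^sub>m evol2 HR HS (- t) (E (evol2 HR HS t X))"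
      using evol2_smult[OF E_evol2_carrier[OF E X]] by simp
    moreover have "evol2 HR HS (- t) (E (evol2 HR HS t X)) \<in> carrier_mat (dR * dS) (dR * dS)"
      using E_evol2_carrier[OF E X] by simp
    ultimately show ?thesis using ij by simp
  qed
  then have "has_avg (\<lambda>t. (evol2 HR HS (- t) (E (evol2 HR HS t (c \<cdot>\<^sub>m X)))) $$ (i, j)) (c * Ep E X $$ (i, j))"
    by (intro has_avg_cong[OF a2]) auto
  with a1 have "Ep E (c \<cdot>\<^sub>m X) $$ (i, j) = c * Ep E X $$ (i, j)" by (rule has_avg_unique)
  then show "Ep E (c \<cdot>\<^sub>m X) $$ (i, j) = (c \<cdot>\<^sub>m Ep E X) $$ (i, j)" using ij by simp
qed auto

lemma Ep_tp:
  assumes E: "channel (dR * dS) E" and X: "X \<in> carrier_mat (dR * dS) (dR * dS)"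
  shows "mtrace (Ep E X) = mtrace X"
proof -
  have a1: "has_avg (\<lambda>t. \<Sum>i<dR * dS. (evol2 HR HS (- t) (E (evol2 HR HS t X))) $$ (i, i)) (\<Sum>i<dR * dS. Ep E X $$ (i, i))"
    by (intro has_avg_sum finite_lessThan avg_f0[OF E X]) auto
  have "(\<Sum>i<dR * dS. (evol2 HR HS (- t) (E (evol2 HR HS t X))) $$ (i, i)) = mtrace X" for t
  proof -
    have c: "evol2 HR HS (- t) (E (evol2 HR HS t X)) \<in> carrier_mat (dR * dS) (dR * dS)"
      using E_evol2_carrier[OF E X] by simp
    have "(\<Sum>i<dR * dS. (evol2 HR HS (- t) (E (evol2 HR HS t X))) $$ (i, i)) = mtrace (evol2 HR HS (- t) (E (evol2 HR HS t X)))"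
      unfolding mtrace_def using c by simp
    also have "\<dots> = mtrace (E (evol2 HR HS t X))" by (rule mtrace_evol2[OF E_evol2_carrier[OF E X]])
    also have "\<dots> = mtrace (evol2 HR HS t X)" using chanD(4)[OF E] X by simp
    also have "\<dots> = mtrace X" by (rule mtrace_evol2[OF X])
    finally show ?thesis .
  qed
  then have "has_avg (\<lambda>t. \<Sum>i<dR * dS. (evol2 HR HS (- t) (E (evol2 HR HS t X))) $$ (i, i)) (mtrace X)"
    by (intro has_avg_cong[OF has_avg_const]) auto
  with a1 have "(\<Sum>i<dR * dS. Ep E X $$ (i, i)) = mtrace X" by (rule has_avg_unique)
  then show ?thesis unfolding mtrace_def using X by simp
qed

lemma Ep_cov:
  assumes E: "channel (dR * dS) E"
  shows "tt_covariant dR dS HR HS (Ep E)"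
  unfolding tt_covariant_def
proof (intro allI ballI)
  fix s :: real and X :: "complex mat" assume X: "X \<in> carrier_mat (dR * dS) (dR * dS)"
  let ?N = "dR * dS"
  define G where "G t = evol2 HR HS (- (t + s)) (E (evol2 HR HS (t + s) X))" for t
  have Gc: "G t \<in> carrier_mat ?N ?N" for t unfolding G_def using E_evol2_carrier[OF E X] by simp
  have fG: "evol2 HR HS (- t) (E (evol2 HR HS t (evol2 HR HS s X))) = evol2 HR HS s (G t)" for t
  proof -
    have "evol2 HR HS s (G t) = evol2 HR HS (s + - (t + s)) (E (evol2 HR HS (t + s) X))"
      unfolding G_def by (rule evol2_comp[OF E_evol2_carrier[OF E X]])
    also have "s + - (t + s) = - t" by simp
    finally show ?thesis unfolding evol2_comp[OF X] by simp
  qed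
  show "Ep E (evol2 HR HS s X) = evol2 HR HS s (Ep E X)"
  proof (rule eq_matI)
    fix i j assume "i < dim_row (evol2 HR HS s (Ep E X))" "j < dim_col (evol2 HR HS s (Ep E X))"
    then have ij: "i < ?N" "j < ?N" using evol2_carrier[OF Ep_carrier[of E X], of s] by auto
    have a1: "has_avg (\<lambda>t. (evol2 HR HS (- t) (E (evol2 HR HS t (evol2 HR HS s X)))) $$ (i, j)) (Ep E (evol2 HR HS s X) $$ (i, j))"
      by (rule avg_f0[OF E evol2_carrier[OF X] ij])
    have a2: "has_avg (\<lambda>t. \<Sum>p<?N. \<Sum>q<?N. (Wt s $$ (i, p) * Wt (- s) $$ (q, j)) * G t $$ (p, q))
      (\<Sum>p<?N. \<Sum>q<?N. (Wt s $$ (i, p) * Wt (- s) $$ (q, j)) * Ep E X $$ (p, q))"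
      unfolding G_def by (intro has_avg_sum finite_lessThan has_avg_cmult avg_f[OF chanD(1-3)[OF E] X]) auto
    have "(evol2 HR HS (- t) (E (evol2 HR HS t (evol2 HR HS s X)))) $$ (i, j) =
      (\<Sum>p<?N. \<Sum>q<?N. (Wt s $$ (i, p) * Wt (- s) $$ (q, j)) * G t $$ (p, q))" for t
      unfolding fG unfolding evol2W using Gc ij by (subst trip_entry[of _ ?N]) (auto simp: mult_ac)
    then have a3: "has_avg (\<lambda>t. (evol2 HR HS (- t) (E (evol2 HR HS t (evol2 HR HS s X)))) $$ (i, j))
      (\<Sum>p<?N. \<Sum>q<?N. (Wt s $$ (i, p) * Wt (- s) $$ (q, j)) * Ep E X $$ (p, q))"
      by (intro has_avg_cong[OF a2]) auto
    have "Ep E (evol2 HR HS s X) $$ (i, j) = (\<Sum>p<?N. \<Sum>q<?N. (Wt s $$ (i, p) * Wt (- s) $$ (q, j)) * Ep E X $$ (p, q))"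
      by (rule has_avg_unique[OF a1 a3])
    also have "\<dots> = evol2 HR HS s (Ep E X) $$ (i, j)"
      unfolding evol2W using ij by (subst trip_entry[of _ ?N]) (auto simp: mult_ac)
    finally show "Ep E (evol2 HR HS s X) $$ (i, j) = evol2 HR HS s (Ep E X) $$ (i, j)" .
  next
    have cc: "evol2 HR HS s (Ep E X) \<in> carrier_mat (dR * dS) (dR * dS)" by (rule evol2_carrier[OF Ep_carrier])
    show "dim_row (Ep E (evol2 HR HS s X)) = dim_row (evol2 HR HS s (Ep E X))"
      "dim_col (Ep E (evol2 HR HS s X)) = dim_col (evol2 HR HS s (Ep E X))"
      using carrier_matD[OF cc] by auto
  qed
qed

lemma Ep_marg:
  assumes E: "channel (dR * dS) E"
    and rR: "\<rho>R \<in> carrier_mat dR dR" and rS: "\<rho>S \<in> carrier_mat dS dS" and rS': "\<rho>S' \<in> carrier_mat dS dS"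
    and comm: "\<rho>S * HS = HS * \<rho>S"
    and hyp: "\<forall>t :: real. ptrace_S dR dS (E (kron (evol HR t \<rho>R) \<rho>S)) = evol HR t \<rho>R \<and>
               ptrace_R dR dS (E (kron (evol HR t \<rho>R) \<rho>S)) = evol HS t \<rho>S'"
  shows "ptrace_S dR dS (Ep E (kron \<rho>R \<rho>S)) = \<rho>R \<and> ptrace_R dR dS (Ep E (kron \<rho>R \<rho>S)) = \<rho>S'"
proof -
  let ?N = "dR * dS"
  define X0 where "X0 = kron \<rho>R \<rho>S"
  have X0: "X0 \<in> carrier_mat ?N ?N" unfolding X0_def using rR rS by auto
  define F where "F t = evol2 HR HS (- t) (E (evol2 HR HS t X0))" for t
  have ev: "evol2 HR HS t X0 = kron (evol HR t \<rho>R) \<rho>S" for t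
    unfolding X0_def evol2_kron[OF rR rS] stationary[OF rS comm] ..
  have Fc: "F t \<in> carrier_mat ?N ?N" for t unfolding F_def using E_evol2_carrier[OF E X0] by simp
  have pS: "ptrace_S dR dS (F t) = \<rho>R" for t
  proof -
    have "ptrace_S dR dS (F t) = evol HR (- t) (ptrace_S dR dS (E (evol2 HR HS t X0)))"
      unfolding F_def by (rule ptrace_S_evol2[OF E_evol2_carrier[OF E X0]])
    also have "\<dots> = \<rho>R" unfolding ev using hyp evol_R_inv[OF rR] by simp
    finally show ?thesis .
  qed
  have pR: "ptrace_R dR dS (F t) = \<rho>S'" for t
  proof -
    have "ptrace_R dR dS (F t) = evol HS (- t) (ptrace_R dR dS (E (evol2 HR HS t X0)))"
      unfolding F_def by (rule ptrace_R_evol2[OF E_evol2_carrier[OF E X0]])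
    also have "\<dots> = \<rho>S'" unfolding ev using hyp evol_S_inv[OF rS'] by simp
    finally show ?thesis .
  qed
  have "ptrace_S dR dS (Ep E X0) = \<rho>R"
  proof (rule eq_matI)
    fix a b assume "a < dim_row \<rho>R" "b < dim_col \<rho>R"
    then have ab: "a < dR" "b < dR" using rR by auto
    have a1: "has_avg (\<lambda>t. \<Sum>s<dS. F t $$ (a * dS + s, b * dS + s)) (\<Sum>s<dS. Ep E X0 $$ (a * dS + s, b * dS + s))"
      unfolding F_def by (intro has_avg_sum finite_lessThan avg_f0[OF E X0]) (use ab in \<open>auto simp: idx_lt\<close>)
    have "(\<Sum>s<dS. F t $$ (a * dS + s, b * dS + s)) = \<rho>R $$ (a, b)" for t
      using arg_cong[OF pS[of t], of "\<lambda>M. M $$ (a, b)"] ab unfolding ptrace_S_def by simp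
    then have a2: "has_avg (\<lambda>t. \<Sum>s<dS. F t $$ (a * dS + s, b * dS + s)) (\<rho>R $$ (a, b))"
      by (intro has_avg_cong[OF has_avg_const]) auto
    have "(\<Sum>s<dS. Ep E X0 $$ (a * dS + s, b * dS + s)) = \<rho>R $$ (a, b)" by (rule has_avg_unique[OF a1 a2])
    then show "ptrace_S dR dS (Ep E X0) $$ (a, b) = \<rho>R $$ (a, b)" unfolding ptrace_S_def using ab by simp
  qed (use rR in \<open>auto simp: ptrace_S_def\<close>)
  moreover have "ptrace_R dR dS (Ep E X0) = \<rho>S'"
  proof (rule eq_matI)
    fix p q assume "p < dim_row \<rho>S'" "q < dim_col \<rho>S'"
    then have pq: "p < dS" "q < dS" using rS' by auto
    have a1: "has_avg (\<lambda>t. \<Sum>r<dR. F t $$ (r * dS + p, r * dS + q)) (\<Sum>r<dR. Ep E X0 $$ (r * dS + p, r * dS + q))"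
      unfolding F_def by (intro has_avg_sum finite_lessThan avg_f0[OF E X0]) (use pq in \<open>auto simp: idx_lt\<close>)
    have "(\<Sum>r<dR. F t $$ (r * dS + p, r * dS + q)) = \<rho>S' $$ (p, q)" for t
      using arg_cong[OF pR[of t], of "\<lambda>M. M $$ (p, q)"] pq unfolding ptrace_R_def by simp
    then have a2: "has_avg (\<lambda>t. \<Sum>r<dR. F t $$ (r * dS + p, r * dS + q)) (\<rho>S' $$ (p, q))"
      by (intro has_avg_cong[OF has_avg_const]) auto
    have "(\<Sum>r<dR. Ep E X0 $$ (r * dS + p, r * dS + q)) = \<rho>S' $$ (p, q)" by (rule has_avg_unique[OF a1 a2])
    then show "ptrace_R dR dS (Ep E X0) $$ (p, q) = \<rho>S' $$ (p, q)" unfolding ptrace_R_def using pq by simp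
  qed (use rS' in \<open>auto simp: ptrace_R_def\<close>)
  ultimately show ?thesis unfolding X0_def by simp
qed

lemma cov_to_t:
  assumes E: "channel (dR * dS) E" and cov: "tt_covariant dR dS HR HS E"
    and rR: "\<rho>R \<in> carrier_mat dR dR" and rS: "\<rho>S \<in> carrier_mat dS dS"
    and comm: "\<rho>S * HS = HS * \<rho>S"
    and m1: "ptrace_S dR dS (E (kron \<rho>R \<rho>S)) = \<rho>R" and m2: "ptrace_R dR dS (E (kron \<rho>R \<rho>S)) = \<rho>S'"
  shows "ptrace_S dR dS (E (kron (evol HR t \<rho>R) \<rho>S)) = evol HR t \<rho>R \<and>
         ptrace_R dR dS (E (kron (evol HR t \<rho>R) \<rho>S)) = evol HS t \<rho>S'"
proof -
  have X0: "kron \<rho>R \<rho>S \<in> carrier_mat (dR * dS) (dR * dS)" using rR rS by auto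
  have "kron (evol HR t \<rho>R) \<rho>S = evol2 HR HS t (kron \<rho>R \<rho>S)"
    unfolding evol2_kron[OF rR rS] stationary[OF rS comm] ..
  then have e: "E (kron (evol HR t \<rho>R) \<rho>S) = evol2 HR HS t (E (kron \<rho>R \<rho>S))"
    using cov X0 unfolding tt_covariant_def by simp
  have c: "E (kron \<rho>R \<rho>S) \<in> carrier_mat (dR * dS) (dR * dS)" using chanD(1)[OF E] X0 by auto
  show ?thesis unfolding e ptrace_S_evol2[OF c] ptrace_R_evol2[OF c] m1 m2 by simp
qed

end

theorem mainTheorem3:
  fixes dR dS :: nat and HR HS \<rho>R \<rho>S \<rho>S' :: "complex mat"
  assumes "hermitian dR HR" and "hermitian dS HS"
    and "density dR \<rho>R" and "density dS \<rho>S" and "density dS \<rho>S'"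
    and "\<rho>S * HS = HS * \<rho>S"
  shows "((\<exists>E. channel (dR * dS) E \<and> tt_covariant dR dS HR HS E \<and>
            ptrace_S dR dS (E (kron \<rho>R \<rho>S)) = \<rho>R \<and>
            ptrace_R dR dS (E (kron \<rho>R \<rho>S)) = \<rho>S')
     \<longleftrightarrow>
         (\<exists>E. channel (dR * dS) E \<and>
            (\<forall>t :: real.
               ptrace_S dR dS (E (kron (evol HR t \<rho>R) \<rho>S)) = evol HR t \<rho>R \<and>
               ptrace_R dR dS (E (kron (evol HR t \<rho>R) \<rho>S)) = evol HS t \<rho>S'))) \<and>
         (\<forall>E. channel (dR * dS) E \<and>
            (\<forall>t :: real.
               ptrace_S dR dS (E (kron (evol HR t \<rho>R) \<rho>S)) = evol HR t \<rho>R \<and>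
               ptrace_R dR dS (E (kron (evol HR t \<rho>R) \<rho>S)) = evol HS t \<rho>S')
          \<longrightarrow> (\<exists>E'.
                (\<forall>X \<in> carrier_mat (dR * dS) (dR * dS). \<forall>i < dR * dS. \<forall>j < dR * dS.
                   ((\<lambda>T. (1 / T) *\<^sub>R integral {0..T}
                        (\<lambda>t. evol2 HR HS (- t) (E (evol2 HR HS t X)) $$ (i, j)))
                    \<longlongrightarrow> E' X $$ (i, j)) at_top) \<and>
                channel (dR * dS) E' \<and> tt_covariant dR dS HR HS E' \<and>
                ptrace_S dR dS (E' (kron \<rho>R \<rho>S)) = \<rho>R \<and>
                ptrace_R dR dS (E' (kron \<rho>R \<rho>S)) = \<rho>S'))"
proof -
  obtain uR lR where R: "orthn dR dR uR" "HR = spm dR uR (\<lambda>a. complex_of_real (lR a))"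
    using spectral[OF assms(1)] by blast
  obtain uS lS where S: "orthn dS dS uS" "HS = spm dS uS (\<lambda>a. complex_of_real (lS a))"
    using spectral[OF assms(2)] by blast
  interpret sy: sysl dR dS uR uS lR lS HR HS
    using R S by unfold_locales auto
  have rR: "\<rho>R \<in> carrier_mat dR dR" using assms(3) unfolding density_def psd_def by auto
  have rS: "\<rho>S \<in> carrier_mat dS dS" using assms(4) unfolding density_def psd_def by auto
  have rS': "\<rho>S' \<in> carrier_mat dS dS" using assms(5) unfolding density_def psd_def by auto
  have part2: "\<forall>E. channel (dR * dS) E \<and>
            (\<forall>t :: real.
               ptrace_S dR dS (E (kron (evol HR t \<rho>R) \<rho>S)) = evol HR t \<rho>R \<and>
               ptrace_R dR dS (E (kron (evol HR t \<rho>R) \<rho>S)) = evol HS t \<rho>S')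
          \<longrightarrow> (\<exists>E'.
                (\<forall>X \<in> carrier_mat (dR * dS) (dR * dS). \<forall>i < dR * dS. \<forall>j < dR * dS.
                   ((\<lambda>T. (1 / T) *\<^sub>R integral {0..T}
                        (\<lambda>t. evol2 HR HS (- t) (E (evol2 HR HS t X)) $$ (i, j)))
                    \<longlongrightarrow> E' X $$ (i, j)) at_top) \<and>
                channel (dR * dS) E' \<and> tt_covariant dR dS HR HS E' \<and>
                ptrace_S dR dS (E' (kron \<rho>R \<rho>S)) = \<rho>R \<and>
                ptrace_R dR dS (E' (kron \<rho>R \<rho>S)) = \<rho>S')"
  proof (intro allI impI)
    fix E assume EH: "channel (dR * dS) E \<and>
            (\<forall>t :: real.
               ptrace_S dR dS (E (kron (evol HR t \<rho>R) \<rho>S)) = evol HR t \<rho>R \<and>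
               ptrace_R dR dS (E (kron (evol HR t \<rho>R) \<rho>S)) = evol HS t \<rho>S')"
    then have E: "channel (dR * dS) E" by auto
    have lim: "\<forall>X \<in> carrier_mat (dR * dS) (dR * dS). \<forall>i < dR * dS. \<forall>j < dR * dS.
                   ((\<lambda>T. (1 / T) *\<^sub>R integral {0..T}
                        (\<lambda>t. evol2 HR HS (- t) (E (evol2 HR HS t X)) $$ (i, j)))
                    \<longlongrightarrow> sy.Ep E X $$ (i, j)) at_top"
      using sy.avg_f0[OF E] unfolding has_avg_def by blast
    have ch: "channel (dR * dS) (sy.Ep E)"
      unfolding channel_def
      using sy.Ep_carrier sy.Ep_add[OF E] sy.Ep_smult[OF E] sy.Ep_tp[OF E] sy.Ep_cp[OF E] by blast
    show "\<exists>E'.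
                (\<forall>X \<in> carrier_mat (dR * dS) (dR * dS). \<forall>i < dR * dS. \<forall>j < dR * dS.
                   ((\<lambda>T. (1 / T) *\<^sub>R integral {0..T}
                        (\<lambda>t. evol2 HR HS (- t) (E (evol2 HR HS t X)) $$ (i, j)))
                    \<longlongrightarrow> E' X $$ (i, j)) at_top) \<and>
                channel (dR * dS) E' \<and> tt_covariant dR dS HR HS E' \<and>
                ptrace_S dR dS (E' (kron \<rho>R \<rho>S)) = \<rho>R \<and>
                ptrace_R dR dS (E' (kron \<rho>R \<rho>S)) = \<rho>S'"
      using lim ch sy.Ep_cov[OF E] sy.Ep_marg[OF E rR rS rS' assms(6)] EH by blast
  qed
  have part1: "(\<exists>E. channel (dR * dS) E \<and> tt_covariant dR dS HR HS E \<and>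
            ptrace_S dR dS (E (kron \<rho>R \<rho>S)) = \<rho>R \<and>
            ptrace_R dR dS (E (kron \<rho>R \<rho>S)) = \<rho>S')
     \<longleftrightarrow>
         (\<exists>E. channel (dR * dS) E \<and>
            (\<forall>t :: real.
               ptrace_S dR dS (E (kron (evol HR t \<rho>R) \<rho>S)) = evol HR t \<rho>R \<and>
               ptrace_R dR dS (E (kron (evol HR t \<rho>R) \<rho>S)) = evol HS t \<rho>S'))"
  proof
    assume "\<exists>E. channel (dR * dS) E \<and> tt_covariant dR dS HR HS E \<and>
            ptrace_S dR dS (E (kron \<rho>R \<rho>S)) = \<rho>R \<and>
            ptrace_R dR dS (E (kron \<rho>R \<rho>S)) = \<rho>S'"
    then obtain E where E: "channel (dR * dS) E" "tt_covariant dR dS HR HS E"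
      "ptrace_S dR dS (E (kron \<rho>R \<rho>S)) = \<rho>R" "ptrace_R dR dS (E (kron \<rho>R \<rho>S)) = \<rho>S'" by blast
    show "\<exists>E. channel (dR * dS) E \<and>
            (\<forall>t :: real.
               ptrace_S dR dS (E (kron (evol HR t \<rho>R) \<rho>S)) = evol HR t \<rho>R \<and>
               ptrace_R dR dS (E (kron (evol HR t \<rho>R) \<rho>S)) = evol HS t \<rho>S')"
      using E sy.cov_to_t[OF E(1,2) rR rS assms(6) E(3,4)] by blast
  next
    assume "\<exists>E. channel (dR * dS) E \<and>
            (\<forall>t :: real.
               ptrace_S dR dS (E (kron (evol HR t \<rho>R) \<rho>S)) = evol HR t \<rho>R \<and>
               ptrace_R dR dS (E (kron (evol HR t \<rho>R) \<rho>S)) = evol HS t \<rho>S')"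
    then show "\<exists>E. channel (dR * dS) E \<and> tt_covariant dR dS HR HS E \<and>
            ptrace_S dR dS (E (kron \<rho>R \<rho>S)) = \<rho>R \<and>
            ptrace_R dR dS (E (kron \<rho>R \<rho>S)) = \<rho>S'"
      using part2 by blast
  qed
  show ?thesis using part1 part2 by blast
qed

end
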